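(* Let $\alpha=(\alpha_1,\dots,\alpha_\ell)\models n$. Then $\mathbb F[\mathcal{OP}_\alpha]$ is a cyclic $H_n(0)$-module generated by the ordered set partition $(12\cdots n,\alpha)$, and the linear map sending $(w,\alpha)\mapsto\overline\pi_w\pi_{w_0(\alpha^c)}$ for all $w\in\mathfrak S_n$ with $\mathrm{Des}(w)\subseteq\mathrm{Des}(\alpha)$ is an isomorphism of $H_n(0)$-modules $\mathbb F[\mathcal{OP}_\alpha]\cong P_{(n),\alpha}=H_n(0)\pi_{w_0(\alpha^c)}$.
   Context: $H_n(0)$ is the 0-Hecke algebra over a field $\mathbb F$ with generators $\pi_1,\dots,\pi_{n-1}$ (relations $\pi_i^2=\pi_i$, far commutation, braid relations); $\overline\pi_i=\pi_i-1$; for a reduced expression $w=s_{i_1}\cdots s_{i_\ell}$, $\pi_w=\pi_{i_1}\cdots\pi_{i_\ell}$, $\overline\pi_w=\overline\pi_{i_1}\cdots\overline\pi_{i_\ell}$. For a composition $\alpha\models n$, $\mathrm{Des}(\alpha)$ is its set of partial sums (excluding $n$), $\alpha^c$ is the composition with $\mathrm{Des}(\alpha^c)=[n-1]\setminus\mathrm{Des}(\alpha)$, and $w_0(\alpha)$ is the minimal-length permutation with descent set $\mathrm{Des}(\alpha)$ (so $w_0(\alpha^c)$ is the minimal-length permutation with descent set $[n-1]\setminus \mathrm{Des}(\alpha)$). For compositions $\gamma\preceq\beta$ (i.e. $\mathrm{Des}(\gamma)\subseteq\mathrm{Des}(\beta)$), $P_{\gamma,\beta}=H_n(0)\overline\pi_{w_0(\gamma)}\pi_{w_0(\beta^c)}$;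 $(n)$ is the one-part composition. An ordered set partition $\sigma=(B_1\mid\cdots\mid B_k)$ of $[n]$ is identified with $(w,\alpha)$, $\alpha=(|B_1|,\dots,|B_k|)$ its shape and $w$ the permutation listing $B_1,\dots,B_k$ each increasingly; $\mathcal{OP}_\alpha$ is the set of ordered set partitions of shape $\alpha$ (equivalently $w$ with $\mathrm{Des}(w)\subseteq\mathrm{Des}(\alpha)$). $H_n(0)$ acts on $\mathbb F[\mathcal{OP}_\alpha]$ by: $\pi_i.\sigma=0$ if $i+1$ lies in a block to the left of $i$; $\pi_i.\sigma=\sigma+s_i(\sigma)$ if $i+1$ lies in a block to the right of $i$; $\pi_i.\sigma=\sigma$ if $i,i+1$ are in the same block; here $s_i(\sigma)$ swaps the letters $i$ and $i+1$. *)

theory Defs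
  imports "HOL-Combinatorics.Combinatorics"
begin

text \<open>Permutations of [n] are functions nat => nat permuting {1..n}, written
  in one-line notation w(1) ... w(n); composition is function composition.\<close>

type_synonym perm = "nat \<Rightarrow> nat"

definition Sn :: "nat \<Rightarrow> perm set" where
  "Sn n = {w. w permutes {1..n}}"

definition sref :: "nat \<Rightarrow> perm" where
  "sref i = transpose i (Suc i)"

definition perm_len :: "nat \<Rightarrow> perm \<Rightarrow> nat" where
  "perm_len n w = card {(i, j). 1 \<le> i \<and> i < j \<and> j \<le> n \<and> w j < w i}"

definition pdes :: "nat \<Rightarrow> perm \<Rightarrow> nat set" where
  "pdes n w = {i. 1 \<le> i \<and> i < n \<and> w (Suc i) < w i}"

definition is_composition :: "nat \<Rightarrow> nat list \<Rightarrow> bool" where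
  "is_composition n \<alpha> \<longleftrightarrow> (\<forall>x\<in>set \<alpha>. 0 < x) \<and> sum_list \<alpha> = n"

definition cdes :: "nat list \<Rightarrow> nat set" where
  "cdes \<alpha> = {sum_list (take k \<alpha>) | k. 1 \<le> k \<and> k < length \<alpha>}"

text \<open>words and reduced expressions: [i1,...,il] represents s_i1 ... s_il\<close>
definition word_perm :: "nat list \<Rightarrow> perm" where
  "word_perm ws = foldr (\<lambda>i w. sref i \<circ> w) ws id"

definition reduced_word :: "nat \<Rightarrow> perm \<Rightarrow> nat list \<Rightarrow> bool" where
  "reduced_word n w ws \<longleftrightarrow> set ws \<subseteq> {1..<n} \<and> word_perm ws = w \<and> length ws = perm_len n w"

definition rw :: "nat \<Rightarrow> perm \<Rightarrow> nat list" where
  "rw n w = (SOME ws. reduced_word n w ws)"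

definition min_des_perm :: "nat \<Rightarrow> nat set \<Rightarrow> perm" where
  "min_des_perm n D = (SOME w. w \<in> Sn n \<and> pdes n w = D \<and>
      (\<forall>u\<in>Sn n. pdes n u = D \<longrightarrow> perm_len n w \<le> perm_len n u))"

text \<open>w0(alpha) and w0(alpha^c), where Des(alpha^c) = [n-1] - Des(alpha)\<close>
definition w0 :: "nat \<Rightarrow> nat list \<Rightarrow> perm" where
  "w0 n \<alpha> = min_des_perm n (cdes \<alpha>)"

definition w0c :: "nat \<Rightarrow> nat list \<Rightarrow> perm" where
  "w0c n \<alpha> = min_des_perm n ({1..<n} - cdes \<alpha>)"

text \<open>Elements are coefficient functions S_n -> F (zero outside S_n).\<close>
definition Hn :: "nat \<Rightarrow> (perm \<Rightarrow> 'a::field) set" where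
  "Hn n = {x. \<forall>w. w \<notin> Sn n \<longrightarrow> x w = 0}"

definition hb :: "perm \<Rightarrow> perm \<Rightarrow> 'a::field" where
  "hb w = (\<lambda>u. if u = w then 1 else 0)"

text \<open>pi_i pi_w = pi_(s_i w) if l(s_i w) > l(w), and = pi_w otherwise\<close>
definition gen_basis :: "nat \<Rightarrow> nat \<Rightarrow> perm \<Rightarrow> perm \<Rightarrow> 'a::field" where
  "gen_basis n i w = (if perm_len n w < perm_len n (sref i \<circ> w) then hb (sref i \<circ> w) else hb w)"

definition hgen :: "nat \<Rightarrow> nat \<Rightarrow> (perm \<Rightarrow> 'a::field) \<Rightarrow> (perm \<Rightarrow> 'a)" where
  "hgen n i x = (\<lambda>u. \<Sum>w\<in>Sn n. x w * gen_basis n i w u)"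

definition wact :: "(nat \<Rightarrow> 'v \<Rightarrow> 'v) \<Rightarrow> nat list \<Rightarrow> 'v \<Rightarrow> 'v" where
  "wact g ws v = foldr g ws v"

definition bar :: "(nat \<Rightarrow> (perm \<Rightarrow> 'a::field) \<Rightarrow> (perm \<Rightarrow> 'a)) \<Rightarrow> nat \<Rightarrow> (perm \<Rightarrow> 'a) \<Rightarrow> (perm \<Rightarrow> 'a)" where
  "bar g i v = (\<lambda>u. g i v u - v u)"

text \<open>action of an arbitrary element h = sum_w h(w) pi_w of H_n(0) on a module whose
  generator action is g (both modules here have vectors perm => F)\<close>
definition hact :: "nat \<Rightarrow> (nat \<Rightarrow> (perm \<Rightarrow> 'a::field) \<Rightarrow> (perm \<Rightarrow> 'a)) \<Rightarrow> (perm \<Rightarrow> 'a) \<Rightarrow> (perm \<Rightarrow> 'a) \<Rightarrow> (perm \<Rightarrow> 'a)" where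
  "hact n g h v = (\<lambda>u. \<Sum>w\<in>Sn n. h w * wact g (rw n w) v u)"

definition hmul :: "nat \<Rightarrow> (perm \<Rightarrow> 'a::field) \<Rightarrow> (perm \<Rightarrow> 'a) \<Rightarrow> (perm \<Rightarrow> 'a)" where
  "hmul n x y = hact n (hgen n) x y"

definition pi_w :: "nat \<Rightarrow> perm \<Rightarrow> perm \<Rightarrow> 'a::field" where
  "pi_w n w = wact (hgen n) (rw n w) (hb id)"

definition pibar_w :: "nat \<Rightarrow> perm \<Rightarrow> perm \<Rightarrow> 'a::field" where
  "pibar_w n w = wact (bar (hgen n)) (rw n w) (hb id)"

definition Pmod :: "nat \<Rightarrow> nat list \<Rightarrow> nat list \<Rightarrow> (perm \<Rightarrow> 'a::field) set" where
  "Pmod n \<gamma> \<beta> = {hmul n h (hmul n (pibar_w n (w0 n \<gamma>)) (pi_w n (w0c n \<beta>))) | h. h \<in> Hn n}"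

text \<open>(w, alpha) with Des(w) subset Des(alpha)\<close>
definition OP :: "nat \<Rightarrow> nat list \<Rightarrow> perm set" where
  "OP n \<alpha> = {w \<in> Sn n. pdes n w \<subseteq> cdes \<alpha>}"

text \<open>index (0-based, left to right) of the block of (w, alpha) containing letter x\<close>
definition blk :: "nat list \<Rightarrow> perm \<Rightarrow> nat \<Rightarrow> nat" where
  "blk \<alpha> w x = card {d \<in> cdes \<alpha>. d < inv w x}"

definition op_basis :: "nat list \<Rightarrow> nat \<Rightarrow> perm \<Rightarrow> perm \<Rightarrow> 'a::field" where
  "op_basis \<alpha> i w =
     (if blk \<alpha> w (Suc i) < blk \<alpha> w i then (\<lambda>_. 0)
      else if blk \<alpha> w i < blk \<alpha> w (Suc i) then (\<lambda>u. hb w u + hb (sref i \<circ> w) u)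
      else hb w)"

definition opgen :: "nat \<Rightarrow> nat list \<Rightarrow> nat \<Rightarrow> (perm \<Rightarrow> 'a::field) \<Rightarrow> (perm \<Rightarrow> 'a)" where
  "opgen n \<alpha> i v = (\<lambda>u. \<Sum>w\<in>OP n \<alpha>. v w * op_basis \<alpha> i w u)"

definition FOP :: "nat \<Rightarrow> nat list \<Rightarrow> (perm \<Rightarrow> 'a::field) set" where
  "FOP n \<alpha> = {v. \<forall>w. w \<notin> OP n \<alpha> \<longrightarrow> v w = 0}"

end

theory Submission
  imports Defs
begin


lemma sref_apply: "sref i x = (if x = i then Suc i else if x = Suc i then i else x)"
  by (simp add: sref_def transpose_def)

lemma sref_sref[simp]: "sref i (sref i x) = x"
  by (simp add: sref_apply)

lemma sref_sref_o[simp]: "sref i \<circ> (sref i \<circ> w) = w"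
  by (auto simp: fun_eq_iff)

lemma Sn_permutes: "w \<in> Sn n \<Longrightarrow> w permutes {1..n}" by (simp add: Sn_def)

lemma sref_permutes: "1 \<le> i \<Longrightarrow> i < n \<Longrightarrow> sref i permutes {1..n}"
  unfolding sref_def by (rule permutes_swap_id) auto

lemma sref_Sn: "w \<in> Sn n \<Longrightarrow> 1 \<le> i \<Longrightarrow> i < n \<Longrightarrow> sref i \<circ> w \<in> Sn n"
  unfolding Sn_def using permutes_compose sref_permutes by blast

lemma Sn_comp: "w \<in> Sn n \<Longrightarrow> u \<in> Sn n \<Longrightarrow> w \<circ> u \<in> Sn n"
  unfolding Sn_def using permutes_compose by blast

lemma id_Sn[simp]: "id \<in> Sn n" by (simp add: Sn_def permutes_id)

lemma Sn_inv: "w \<in> Sn n \<Longrightarrow> inv w \<in> Sn n"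
  unfolding Sn_def using permutes_inv by blast

lemma Sn_range: "w \<in> Sn n \<Longrightarrow> x \<in> {1..n} \<Longrightarrow> w x \<in> {1..n}"
  using permutes_in_image[OF Sn_permutes] by blast

lemma Sn_out: "w \<in> Sn n \<Longrightarrow> x \<notin> {1..n} \<Longrightarrow> w x = x"
  using permutes_not_in[OF Sn_permutes] by blast

lemma Sn_inv1: "w \<in> Sn n \<Longrightarrow> w (inv w x) = x"
  using permutes_inverses[OF Sn_permutes] by blast
lemma Sn_inv2: "w \<in> Sn n \<Longrightarrow> inv w (w x) = x"
  using permutes_inverses[OF Sn_permutes] by blast

lemma Sn_inj: "w \<in> Sn n \<Longrightarrow> w x = w y \<longleftrightarrow> x = y"
  by (metis Sn_inv2)

lemma Sn_finite: "finite (Sn n)"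
  unfolding Sn_def by (rule finite_permutations) simp

lemma inv_sref_comp: "w \<in> Sn n \<Longrightarrow> inv (sref i \<circ> w) x = inv w (sref i x)"
proof -
  assume w: "w \<in> Sn n"
  have "(sref i \<circ> w) (inv w (sref i x)) = x" using Sn_inv1[OF w] by simp
  moreover have "bij (sref i \<circ> w)"
    using w unfolding Sn_def sref_def
    by (simp add: bij_comp permutes_bij)
  ultimately show ?thesis
    by (metis bij_inv_eq_iff)
qed

definition invs :: "nat \<Rightarrow> perm \<Rightarrow> (nat \<times> nat) set" where
  "invs n w = {(i, j). 1 \<le> i \<and> i < j \<and> j \<le> n \<and> w j < w i}"

lemma perm_len_invs: "perm_len n w = card (invs n w)"
  by (simp add: perm_len_def invs_def)

lemma invs_sub: "invs n w \<subseteq> {1..n} \<times> {1..n}"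
  by (auto simp: invs_def)

lemma finite_invs[simp]: "finite (invs n w)"
  using invs_sub finite_subset by blast

lemma sref_less_iff:
  "(sref i y < sref i x) \<longleftrightarrow> (y < x \<and> \<not> (y = i \<and> x = Suc i)) \<or> (y = Suc i \<and> x = i)"
  by (auto simp: sref_apply)

lemma invs_sref_up:
  assumes w: "w \<in> Sn n" and i: "1 \<le> i" "i < n" and up: "inv w i < inv w (Suc i)"
  shows "invs n (sref i \<circ> w) = insert (inv w i, inv w (Suc i)) (invs n w)"
    and "(inv w i, inv w (Suc i)) \<notin> invs n w"
proof -
  let ?a = "inv w i" and ?b = "inv w (Suc i)"
  have wa: "w ?a = i" and wb: "w ?b = Suc i" using Sn_inv1[OF w] by auto
  have ain: "?a \<in> {1..n}" and bin: "?b \<in> {1..n}"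
    using w i by (metis Sn_inv Sn_range atLeastAtMost_iff le_SucI less_imp_le_nat Suc_leI)+
  show "invs n (sref i \<circ> w) = insert (?a, ?b) (invs n w)"
  proof (rule set_eqI, clarify)
    fix p q
    have pa: "w p = i \<longleftrightarrow> p = ?a" and qb: "w q = Suc i \<longleftrightarrow> q = ?b"
      and pb: "w p = Suc i \<longleftrightarrow> p = ?b" and qa: "w q = i \<longleftrightarrow> q = ?a"
      using Sn_inj[OF w] wa wb by metis+
    show "(p, q) \<in> invs n (sref i \<circ> w) \<longleftrightarrow> (p, q) \<in> insert (?a, ?b) (invs n w)"
      unfolding invs_def o_def sref_less_iff using ain bin up pa qb pb qa
      by auto
  qed
  show "(?a, ?b) \<notin> invs n w" using wa wb by (simp add: invs_def)
qed

lemma len_sref_up: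
  assumes w: "w \<in> Sn n" and i: "1 \<le> i" "i < n" and up: "inv w i < inv w (Suc i)"
  shows "perm_len n (sref i \<circ> w) = Suc (perm_len n w)"
  using invs_sref_up[OF assms] by (simp add: perm_len_invs)

lemma len_sref_down:
  assumes w: "w \<in> Sn n" and i: "1 \<le> i" "i < n" and dn: "inv w (Suc i) < inv w i"
  shows "perm_len n w = Suc (perm_len n (sref i \<circ> w))"
proof -
  have w': "sref i \<circ> w \<in> Sn n" using sref_Sn w i by blast
  have "inv (sref i \<circ> w) i < inv (sref i \<circ> w) (Suc i)"
    using dn by (simp add: inv_sref_comp[OF w] sref_apply)
  from len_sref_up[OF w' i this] show ?thesis by simp
qed

lemma inv_Sn_ne: "w \<in> Sn n \<Longrightarrow> x \<noteq> y \<Longrightarrow> inv w x \<noteq> inv w y"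
  by (metis Sn_inv1)

lemma len_sref_cases:
  assumes w: "w \<in> Sn n" and i: "1 \<le> i" "i < n"
  shows "(inv w i < inv w (Suc i) \<and> perm_len n (sref i \<circ> w) = Suc (perm_len n w)) \<or>
         (inv w (Suc i) < inv w i \<and> perm_len n w = Suc (perm_len n (sref i \<circ> w)))"
  using len_sref_up[OF assms] len_sref_down[OF assms] inv_Sn_ne[OF w, of i "Suc i"]
  by (metis linorder_neqE_nat n_not_Suc_n)

lemma perm_len_id[simp]: "perm_len n id = 0"
proof -
  have "{(i, j). 1 \<le> i \<and> i < j \<and> j \<le> n \<and> id j < (id i::nat)} = {}" by auto
  then show ?thesis unfolding perm_len_def by (metis card.empty)
qed

lemma perm_len_zero: assumes w: "w \<in> Sn n" and "perm_len n w = 0" shows "w = id"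
proof -
  have e: "invs n w = {}" using assms(2) by (simp add: perm_len_invs)
  have mono: "\<And>p q. 1 \<le> p \<Longrightarrow> p \<le> q \<Longrightarrow> q \<le> n \<Longrightarrow> w p \<le> w q"
  proof -
    fix p q assume "1 \<le> p" "p \<le> q" "q \<le> n"
    show "w p \<le> w q"
    proof (cases "p = q")
      case False
      then have "(p, q) \<notin> invs n w" using e by auto
      then show ?thesis using \<open>1 \<le> p\<close> \<open>p \<le> q\<close> \<open>q \<le> n\<close> False by (auto simp: invs_def)
    qed simp
  qed
  have "1 \<le> p \<longrightarrow> p \<le> n \<longrightarrow> w p = p" for p
  proof (induction p rule: less_induct)
    case (less p)
    then have IH: "\<forall>q<p. 1 \<le> q \<longrightarrow> q \<le> n \<longrightarrow> w q = q" by blast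
    show ?case
    proof (intro impI)
    assume p: "1 \<le> p" "p \<le> n"
    have "w p \<in> {1..n}" using Sn_range[OF w] p by simp
    show "w p = p"
    proof (rule ccontr)
      assume ne: "w p \<noteq> p"
      show False
      proof (cases "w p < p")
        case True
        then have "w (w p) = w p" using IH \<open>w p \<in> {1..n}\<close> by auto
        then show False using Sn_inj[OF w] ne by metis
      next
        case False
        then have lt: "p < w p" using ne by simp
        let ?q = "inv w p"
        have wq: "w ?q = p" using Sn_inv1[OF w] by simp
        have qin: "?q \<in> {1..n}" using w p by (metis Sn_inv Sn_range atLeastAtMost_iff)
        have "?q \<noteq> p" using wq ne by auto
        moreover have "\<not> ?q < p" using IH qin wq ne by (metis atLeastAtMost_iff)
        ultimately have "p < ?q" by simp
        then have "w p \<le> w ?q" using mono p qin by auto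
        then show False using lt wq by simp
      qed
    qed
    qed
  qed
  then show ?thesis using Sn_out[OF w] by (auto simp: fun_eq_iff)
qed


lemma word_perm_Nil[simp]: "word_perm [] = id" by (simp add: word_perm_def)
lemma word_perm_Cons[simp]: "word_perm (i # ws) = sref i \<circ> word_perm ws"
  by (simp add: word_perm_def)
lemma word_perm_snoc: "word_perm (ws @ [p]) = word_perm ws \<circ> sref p"
  by (induction ws) (auto simp: word_perm_def)

lemma word_perm_Sn: "set ws \<subseteq> {1..<n} \<Longrightarrow> word_perm ws \<in> Sn n"
  by (induction ws) (auto intro: sref_Sn)

lemma len_word_le: "set ws \<subseteq> {1..<n} \<Longrightarrow> perm_len n (word_perm ws) \<le> length ws"
proof (induction ws)
  case (Cons i ws)
  then have w: "word_perm ws \<in> Sn n" and i: "1 \<le> i" "i < n" using word_perm_Sn by auto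
  from len_sref_cases[OF w i] Cons(1)[OF _] Cons(2) show ?case
    by (simp only: word_perm_Cons length_Cons) (auto simp del: comp_apply)
qed simp

lemma reduced_Cons:
  assumes "reduced_word n u (i # ws)"
  shows "reduced_word n (sref i \<circ> u) ws" "inv u (Suc i) < inv u i" "1 \<le> i" "i < n" "u \<in> Sn n"
proof -
  let ?x = "word_perm ws"
  have s: "set ws \<subseteq> {1..<n}" and i: "1 \<le> i" "i < n" and u: "u = sref i \<circ> ?x"
    and l: "length ws + 1 = perm_len n u"
    using assms by (auto simp: reduced_word_def)
  have x: "?x \<in> Sn n" using word_perm_Sn[OF s] .
  have le: "perm_len n ?x \<le> length ws" using len_word_le[OF s] .
  from len_sref_cases[OF x i] le l u
  have up: "inv ?x i < inv ?x (Suc i)" and lx: "perm_len n ?x = length ws" by auto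
  show "reduced_word n (sref i \<circ> u) ws" using s lx u by (simp add: reduced_word_def)
  show "inv u (Suc i) < inv u i" using up u by (simp add: inv_sref_comp[OF x] sref_apply)
  show "1 \<le> i" "i < n" by fact+
  show "u \<in> Sn n" using u x i sref_Sn by simp
qed

lemma reduced_Cons_intro:
  assumes "reduced_word n x ws" "1 \<le> i" "i < n" "inv x i < inv x (Suc i)"
  shows "reduced_word n (sref i \<circ> x) (i # ws)"
proof -
  have s: "set ws \<subseteq> {1..<n}" and x: "word_perm ws = x" "length ws = perm_len n x"
    using assms(1) by (auto simp: reduced_word_def)
  have xs: "x \<in> Sn n" using word_perm_Sn[OF s] x by simp
  show ?thesis using len_sref_up[OF xs assms(2,3,4)] s x assms(2,3)
    by (auto simp: reduced_word_def)
qed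

lemma desc_reduced:
  assumes "reduced_word n (sref i \<circ> u) c" "inv u (Suc i) < inv u i" "1 \<le> i" "i < n" "u \<in> Sn n"
  shows "reduced_word n u (i # c)"
proof -
  have "inv (sref i \<circ> u) i < inv (sref i \<circ> u) (Suc i)"
    using assms(2) by (simp add: inv_sref_comp[OF assms(5)] sref_apply)
  from reduced_Cons_intro[OF assms(1) assms(3,4) this] show ?thesis by simp
qed

lemma no_desc_id:
  assumes w: "w \<in> Sn n" and nd: "\<And>i. 1 \<le> i \<Longrightarrow> i < n \<Longrightarrow> w i < w (Suc i)"
  shows "w = id"
proof -
  have inc: "w p < w q" if "1 \<le> p" "p < q" "q \<le> n" for p q
    using that
  proof (induction q rule: less_induct)
    case (less q)
    show ?case
    proof (cases "p = q - 1")
      case True then show ?thesis using nd[of p] less.prems using less_imp_le_nat by (metis One_nat_def Suc_diff_1 le_trans less_le_trans not_less_eq_eq zero_less_one)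
    next
      case False
      then have "w p < w (q - 1)" using less by auto
      also have "w (q - 1) < w q" using nd[of "q - 1"] less.prems False by simp
      finally show ?thesis .
    qed
  qed
  have "invs n w = {}" unfolding invs_def using inc by (auto dest: less_asym)
  then show ?thesis using perm_len_zero[OF w] by (simp add: perm_len_invs)
qed

lemma exists_left_desc:
  assumes u: "u \<in> Sn n" and ne: "u \<noteq> id"
  shows "\<exists>i. 1 \<le> i \<and> i < n \<and> inv u (Suc i) < inv u i"
proof (rule ccontr)
  assume "\<not> ?thesis"
  then have "\<And>i. 1 \<le> i \<Longrightarrow> i < n \<Longrightarrow> inv u i < inv u (Suc i)"
    using inv_Sn_ne[OF u] by (metis linorder_neqE_nat n_not_Suc_n)
  from no_desc_id[OF Sn_inv[OF u] this] have "inv u = id" .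
  then have "u = id" using Sn_inv1[OF u] by (metis id_apply fun_eq_iff)
  with ne show False by simp
qed

lemma exists_reduced: "u \<in> Sn n \<Longrightarrow> \<exists>ws. reduced_word n u ws"
proof (induction "perm_len n u" arbitrary: u rule: less_induct)
  case less
  show ?case
  proof (cases "u = id")
    case True
    then show ?thesis by (rule_tac x="[]" in exI) (simp add: reduced_word_def)
  next
    case False
    then obtain i where i: "1 \<le> i" "i < n" "inv u (Suc i) < inv u i"
      using exists_left_desc[OF less.prems] by blast
    have x: "sref i \<circ> u \<in> Sn n" using sref_Sn less.prems i by blast
    have "perm_len n u = Suc (perm_len n (sref i \<circ> u))"
      using len_sref_down[OF less.prems i] .
    then obtain c where "reduced_word n (sref i \<circ> u) c" using less.hyps[OF _ x] by auto
    then show ?thesis using desc_reduced i less.prems by blast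
  qed
qed

lemma rw_reduced: "u \<in> Sn n \<Longrightarrow> reduced_word n u (rw n u)"
  unfolding rw_def using exists_reduced someI_ex by metis

lemma rw_id[simp]: "rw n id = []"
proof -
  have "reduced_word n id (rw n id)" using rw_reduced by simp
  then show ?thesis by (simp add: reduced_word_def)
qed

lemma reduced_set: "reduced_word n u ws \<Longrightarrow> set ws \<subseteq> {1..<n}"
  by (simp add: reduced_word_def)

lemma reduced_Sn: "reduced_word n u ws \<Longrightarrow> u \<in> Sn n"
  by (metis reduced_word_def word_perm_Sn)

lemma wact_Nil[simp]: "wact X [] v = v" by (simp add: wact_def)
lemma wact_Cons[simp]: "wact X (i # ws) v = X i (wact X ws v)" by (simp add: wact_def)
lemma wact_append: "wact X (ws @ ws') v = wact X ws (wact X ws' v)" by (simp add: wact_def)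

lemma sref_comm: "Suc i < j \<Longrightarrow> sref j \<circ> (sref i \<circ> u) = sref i \<circ> (sref j \<circ> u)"
  by (auto simp: fun_eq_iff sref_apply)

lemma sref_braid: "sref (Suc i) \<circ> (sref i \<circ> (sref (Suc i) \<circ> u)) = sref i \<circ> (sref (Suc i) \<circ> (sref i \<circ> u))"
  by (auto simp: fun_eq_iff sref_apply)



lemma braid_indep:
  fixes X :: "nat \<Rightarrow> 'v \<Rightarrow> 'v"
  assumes comm: "\<And>i j v. 1 \<le> i \<Longrightarrow> Suc i < j \<Longrightarrow> j < n \<Longrightarrow> X i (X j v) = X j (X i v)"
    and braid: "\<And>i v. 1 \<le> i \<Longrightarrow> Suc i < n \<Longrightarrow> X i (X (Suc i) (X i v)) = X (Suc i) (X i (X (Suc i) v))"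
  shows "reduced_word n u a \<Longrightarrow> reduced_word n u b \<Longrightarrow> wact X a v = wact X b v"
proof (induction "length a" arbitrary: u a b v rule: less_induct)
  case less
  have key: "wact X (i # a') v = wact X (j # b') v"
    if ra: "reduced_word n u (i # a')" and rb: "reduced_word n u (j # b')" and ij: "i < j"
      and IH: "\<And>x c d v. length c < length (i # a') \<Longrightarrow> reduced_word n x c \<Longrightarrow> reduced_word n x d \<Longrightarrow> wact X c v = wact X d v"
    for i j a' b' v
  proof -
    note A = reduced_Cons[OF ra] and B = reduced_Cons[OF rb]
    have u: "u \<in> Sn n" using A by simp
    have la: "length a' = perm_len n (sref i \<circ> u)" using A(1) by (simp add: reduced_word_def)
    show ?thesis
    proof (cases "j = Suc i")
      case False
      then have ij2: "Suc i < j" using ij by simp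
      let ?x = "sref i \<circ> u" and ?x' = "sref j \<circ> u"
      have x: "?x \<in> Sn n" and x': "?x' \<in> Sn n" using A B by (auto intro: sref_Sn)
      have dx: "inv ?x (Suc j) < inv ?x j" using B(2) ij2
        by (simp add: inv_sref_comp[OF u] sref_apply)
      have dx': "inv ?x' (Suc i) < inv ?x' i" using A(2) ij2
        by (simp add: inv_sref_comp[OF u] sref_apply)
      obtain c where c: "reduced_word n (sref j \<circ> ?x) c"
        using exists_reduced sref_Sn[OF x B(3,4)] by blast
      have c': "reduced_word n (sref i \<circ> ?x') c" using c sref_comm[OF ij2, of u] by simp
      have r1: "reduced_word n ?x (j # c)" using desc_reduced[OF c dx B(3,4) x] .
      have r2: "reduced_word n ?x' (i # c)" using desc_reduced[OF c' dx' A(3,4) x'] .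
      have lj: "length (j # c) = length a'" using r1 la by (simp add: reduced_word_def)
      have e1: "wact X a' v = wact X (j # c) v" using IH[OF _ A(1) r1] by simp
      have "length b' = length a'" using ra rb by (simp add: reduced_word_def)
      moreover have "length (i # c) = length b'" using r2 B(1) by (simp add: reduced_word_def)
      ultimately have e2: "wact X b' v = wact X (i # c) v" using IH[OF _ B(1) r2] by simp
      show ?thesis using e1 e2 comm[OF A(3) ij2 B(4)] by simp
    next
      case True
      let ?x = "sref i \<circ> u" and ?x' = "sref (Suc i) \<circ> u"
      have x: "?x \<in> Sn n" and x': "?x' \<in> Sn n" using A B True by (auto intro: sref_Sn)
      have dx: "inv ?x (Suc (Suc i)) < inv ?x (Suc i)" using A(2) B(2) True
        by (simp add: inv_sref_comp[OF u] sref_apply)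
      let ?y = "sref (Suc i) \<circ> ?x"
      have y: "?y \<in> Sn n" using sref_Sn[OF x] B(3,4) True by simp
      have dy: "inv ?y (Suc i) < inv ?y i" using A(2) B(2) True
        by (simp add: inv_sref_comp[OF x] inv_sref_comp[OF u] sref_apply)
      obtain c where c: "reduced_word n (sref i \<circ> ?y) c"
        using exists_reduced sref_Sn[OF y A(3,4)] by blast
      have r1: "reduced_word n ?x (Suc i # i # c)"
        using desc_reduced[OF desc_reduced[OF c dy A(3,4) y] dx] B(3,4) True x by simp
      have dx': "inv ?x' (Suc i) < inv ?x' i" using A(2) B(2) True
        by (simp add: inv_sref_comp[OF u] sref_apply)
      let ?y' = "sref i \<circ> ?x'"
      have y': "?y' \<in> Sn n" using sref_Sn[OF x'] A(3,4) by simp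
      have dy': "inv ?y' (Suc (Suc i)) < inv ?y' (Suc i)" using A(2) B(2) True
        by (simp add: inv_sref_comp[OF x'] inv_sref_comp[OF u] sref_apply)
      have c': "reduced_word n (sref (Suc i) \<circ> ?y') c" using c sref_braid[of i u] by simp
      have r2: "reduced_word n ?x' (i # Suc i # c)"
        using desc_reduced[OF desc_reduced[OF c' dy' B(3,4)[unfolded True] y'] dx' A(3,4) x'] .
      have e1: "wact X a' v = wact X (Suc i # i # c) v"
        using IH[OF _ A(1) r1] by simp
      have "length b' = length a'" using ra rb by (simp add: reduced_word_def)
      then have e2: "wact X b' v = wact X (i # Suc i # c) v" using IH[OF _ B(1)[unfolded True] r2] by simp
      show ?thesis using e1 e2 braid[OF A(3)] B(4) True by simp
    qed
  qed
  show ?case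
  proof (cases a)
    case Nil
    then have "perm_len n u = 0" using less.prems by (simp add: reduced_word_def)
    then have "b = []" using less.prems by (simp add: reduced_word_def)
    then show ?thesis using Nil by simp
  next
    case (Cons i a')
    then obtain j b' where b: "b = j # b'" using less.prems
      by (cases b) (auto simp: reduced_word_def)
    have IH: "\<And>x c d v. length c < length (i # a') \<Longrightarrow> reduced_word n x c \<Longrightarrow> reduced_word n x d \<Longrightarrow> wact X c v = wact X d v"
      using less.hyps Cons by blast
    consider "i = j" | "i < j" | "j < i" by linarith
    then show ?thesis
    proof cases
      case 1
      have "wact X a' v = wact X b' v"
        using IH[OF _ reduced_Cons(1)[OF less.prems(1)[unfolded Cons]]] reduced_Cons(1)[OF less.prems(2)[unfolded b]] 1 by simp
      then show ?thesis using Cons b 1 by simp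
    next
      case 2 then show ?thesis using key[OF less.prems(1)[unfolded Cons] less.prems(2)[unfolded b] _ IH] Cons b by simp
    next
      case 3
      have eq: "length (j # b') = length (i # a')" using less.prems Cons b by (simp add: reduced_word_def)
      have IH': "wact X c v = wact X d v" if "length c < length (j # b')" "reduced_word n x c" "reduced_word n x d" for x c d v
        using IH[of c x d v] that eq by simp
      show ?thesis using key[OF less.prems(2)[unfolded b] less.prems(1)[unfolded Cons] 3 IH'] Cons b by simp
    qed
  qed
qed


lemma bij_Sn: "w \<in> Sn n \<Longrightarrow> bij w"
  using Sn_permutes permutes_bij by blast

lemma inv_sref_bij: "bij w \<Longrightarrow> inv (sref i \<circ> w) x = inv w (sref i x)"
proof -
  assume b: "bij w"
  have b2: "bij (sref i \<circ> w)" using b by (simp add: sref_def bij_comp)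
  have "(sref i \<circ> w) (inv w (sref i x)) = x" using b by (simp add: bij_is_surj surj_f_inv_f)
  then show ?thesis using b2 by (metis bij_inv_eq_iff)
qed

lemma bij_sref_comp: "bij w \<Longrightarrow> bij (sref i \<circ> w)"
  by (simp add: sref_def bij_comp)

definition gstep :: "nat \<Rightarrow> perm \<Rightarrow> perm" where
  "gstep i w = (if inv w i < inv w (Suc i) then sref i \<circ> w else w)"

lemma gstep_Sn: "w \<in> Sn n \<Longrightarrow> 1 \<le> i \<Longrightarrow> i < n \<Longrightarrow> gstep i w \<in> Sn n"
  by (simp add: gstep_def sref_Sn)

lemma gen_basis_gstep:
  assumes "w \<in> Sn n" "1 \<le> i" "i < n"
  shows "gen_basis n i w = hb (gstep i w)"
  using len_sref_cases[OF assms] by (auto simp: gen_basis_def gstep_def)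

lemma hb_sum: "finite S \<Longrightarrow> (\<Sum>w\<in>S. c w * hb w u) = (if u \<in> S then c u else 0)"
  by (simp add: hb_def if_distrib[of "\<lambda>x. c _ * x"] sum.If_cases cong: if_cong)

lemma hb_sum_left: "finite S \<Longrightarrow> (\<Sum>w'\<in>S. hb w w' * f w') = (if w \<in> S then f w else 0)"
proof -
  assume S: "finite S"
  have "(\<lambda>w'. hb w w' * f w') = (\<lambda>w'. if w' = w then f w else 0)" by (rule ext) (simp add: hb_def)
  then show ?thesis using S by (subst \<open>_ = _\<close>) (simp add: sum.delta')
qed

lemma hgen_hb: "w \<in> Sn n \<Longrightarrow> hgen n i (hb w) = gen_basis n i w"
proof -
  assume w: "w \<in> Sn n"
  have "(\<Sum>w'\<in>Sn n. hb w w' * gen_basis n i w' u) = gen_basis n i w u" for u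
    using w Sn_finite by (simp add: hb_sum_left)
  then show ?thesis by (auto simp: hgen_def fun_eq_iff)
qed

lemma hgen_sum:
  assumes "finite K"
  shows "hgen n i (\<lambda>u. \<Sum>k\<in>K. c k * f k u) = (\<lambda>u. \<Sum>k\<in>K. c k * hgen n i (f k) u)"
  unfolding hgen_def
  by (auto simp: fun_eq_iff sum_distrib_left sum_distrib_right mult.assoc intro: sum.swap)

lemma hgen_add: "hgen n i (\<lambda>u. x u + y u) = (\<lambda>u. hgen n i x u + hgen n i y u)"
  by (simp add: hgen_def fun_eq_iff distrib_right sum.distrib)
lemma hgen_diff: "hgen n i (\<lambda>u. x u - y u) = (\<lambda>u. hgen n i x u - hgen n i y u)"
  by (simp add: hgen_def fun_eq_iff left_diff_distrib sum_subtractf)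
lemma hgen_scale: "hgen n i (\<lambda>u. c * x u) = (\<lambda>u. c * hgen n i x u)"
  by (simp add: hgen_def fun_eq_iff sum_distrib_left mult.assoc)
lemma hgen_zero: "hgen n i (\<lambda>u. 0) = (\<lambda>u. 0)"
  by (simp add: hgen_def fun_eq_iff)

lemma hgen_expand: "hgen n i x = (\<lambda>u. \<Sum>w\<in>Sn n. x w * gen_basis n i w u)"
  by (simp add: hgen_def)

lemma hgen_gstep:
  assumes "1 \<le> i" "i < n"
  shows "hgen n i x = (\<lambda>u. \<Sum>w\<in>Sn n. x w * hb (gstep i w) u)"
  unfolding hgen_def apply (intro ext sum.cong refl)
  apply (subst gen_basis_gstep) prefer 4 apply (rule refl) using assms apply auto done

lemma hgen_hb_step: "w \<in> Sn n \<Longrightarrow> 1 \<le> i \<Longrightarrow> i < n \<Longrightarrow> hgen n i (hb w) = hb (gstep i w)"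
  by (simp add: hgen_hb gen_basis_gstep)

lemma hgen_hgen:
  assumes "1 \<le> i" "i < n" "1 \<le> j" "j < n"
  shows "hgen n i (hgen n j x) = (\<lambda>u. \<Sum>w\<in>Sn n. x w * hb (gstep i (gstep j w)) u)"
proof -
  have "hgen n i (hgen n j x) = (\<lambda>u. \<Sum>w\<in>Sn n. x w * hgen n i (hb (gstep j w)) u)"
    unfolding hgen_gstep[OF assms(3,4)] by (rule hgen_sum[OF Sn_finite])
  also have "\<dots> = (\<lambda>u. \<Sum>w\<in>Sn n. x w * hb (gstep i (gstep j w)) u)"
    apply (intro ext sum.cong refl) apply (subst hgen_hb_step) using assms apply (auto simp: gstep_Sn) done
  finally show ?thesis .
qed

lemma hgen_hgen_hgen:
  assumes "1 \<le> i" "i < n" "1 \<le> j" "j < n" "1 \<le> k" "k < n"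
  shows "hgen n i (hgen n j (hgen n k x)) = (\<lambda>u. \<Sum>w\<in>Sn n. x w * hb (gstep i (gstep j (gstep k w))) u)"
proof -
  have "hgen n i (hgen n j (hgen n k x)) = (\<lambda>u. \<Sum>w\<in>Sn n. x w * hgen n i (hb (gstep j (gstep k w))) u)"
    unfolding hgen_hgen[OF assms(3-6)] by (rule hgen_sum[OF Sn_finite])
  also have "\<dots> = (\<lambda>u. \<Sum>w\<in>Sn n. x w * hb (gstep i (gstep j (gstep k w))) u)"
    apply (intro ext sum.cong refl) apply (subst hgen_hb_step) using assms apply (auto simp: gstep_Sn) done
  finally show ?thesis .
qed

lemma gstep_idem: "bij w \<Longrightarrow> gstep i (gstep i w) = gstep i w"
  by (auto simp: gstep_def inv_sref_bij sref_apply)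

lemma gstep_bij: "bij w \<Longrightarrow> bij (gstep i w)"
  by (simp add: gstep_def bij_sref_comp)

lemma gstep_comm: "bij w \<Longrightarrow> Suc i < j \<Longrightarrow> gstep i (gstep j w) = gstep j (gstep i w)"
  by (auto simp: gstep_def inv_sref_bij bij_sref_comp sref_apply sref_comm fun_eq_iff)

lemma gstep_braid: "bij w \<Longrightarrow> gstep i (gstep (Suc i) (gstep i w)) = gstep (Suc i) (gstep i (gstep (Suc i) w))"
  by (auto simp: gstep_def inv_sref_bij bij_sref_comp sref_apply sref_braid)

lemma hgen_idem: assumes "1 \<le> i" "i < n" shows "hgen n i (hgen n i x) = hgen n i x"
proof -
  have "hgen n i (hgen n i x) = (\<lambda>u. \<Sum>w\<in>Sn n. x w * hb (gstep i (gstep i w)) u)"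
    by (rule hgen_hgen[OF assms assms])
  also have "\<dots> = (\<lambda>u. \<Sum>w\<in>Sn n. x w * hb (gstep i w) u)"
    by (intro ext sum.cong refl) (simp add: gstep_idem bij_Sn)
  finally show ?thesis by (simp add: hgen_gstep[OF assms])
qed

lemma hgen_comm: assumes "1 \<le> i" "Suc i < j" "j < n" shows "hgen n i (hgen n j x) = hgen n j (hgen n i x)"
proof -
  have "(\<lambda>u. \<Sum>w\<in>Sn n. x w * hb (gstep i (gstep j w)) u) = (\<lambda>u. \<Sum>w\<in>Sn n. x w * hb (gstep j (gstep i w)) u)"
    by (intro ext sum.cong refl) (subst gstep_comm, auto simp: bij_Sn assms)
  then show ?thesis using assms by (simp add: hgen_hgen)
qed

lemma hgen_braid: assumes "1 \<le> i" "Suc i < n" shows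
   "hgen n i (hgen n (Suc i) (hgen n i x)) = hgen n (Suc i) (hgen n i (hgen n (Suc i) x))"
proof -
  have "(\<lambda>u. \<Sum>w\<in>Sn n. x w * hb (gstep i (gstep (Suc i) (gstep i w))) u) = (\<lambda>u. \<Sum>w\<in>Sn n. x w * hb (gstep (Suc i) (gstep i (gstep (Suc i) w))) u)"
    by (intro ext sum.cong refl) (subst gstep_braid, auto simp: bij_Sn assms)
  then show ?thesis using assms by (simp add: hgen_hgen_hgen)
qed

lemma bar_apply: "bar g i v = (\<lambda>u. g i v u - v u)" by (simp add: bar_def)

lemma bar_comm: assumes "1 \<le> i" "Suc i < j" "j < n" shows "bar (hgen n) i (bar (hgen n) j x) = bar (hgen n) j (bar (hgen n) i x)"
  by (simp add: bar_apply hgen_diff hgen_comm[OF assms] algebra_simps)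

lemma bar_braid: assumes "1 \<le> i" "Suc i < n" shows
   "bar (hgen n) i (bar (hgen n) (Suc i) (bar (hgen n) i x)) = bar (hgen n) (Suc i) (bar (hgen n) i (bar (hgen n) (Suc i) x))"
proof -
  have i1: "1 \<le> Suc i" and i2: "i < n" using assms by auto
  show ?thesis
    by (simp add: bar_apply hgen_diff hgen_add hgen_idem[OF assms(1) i2] hgen_idem[OF i1 assms(2)] hgen_braid[OF assms] algebra_simps)
qed

definition Lw :: "nat \<Rightarrow> perm \<Rightarrow> (perm \<Rightarrow> 'a::field) \<Rightarrow> (perm \<Rightarrow> 'a)" where
  "Lw n w x = wact (hgen n) (rw n w) x"

definition Lbw :: "nat \<Rightarrow> perm \<Rightarrow> (perm \<Rightarrow> 'a::field) \<Rightarrow> (perm \<Rightarrow> 'a)" where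
  "Lbw n w x = wact (bar (hgen n)) (rw n w) x"

lemma Lw_indep: "reduced_word n u a \<Longrightarrow> wact (hgen n) a x = Lw n u x"
  unfolding Lw_def
  by (rule braid_indep[where n=n]) (auto intro: hgen_comm hgen_braid rw_reduced reduced_Sn)

lemma Lbw_indep: "reduced_word n u a \<Longrightarrow> wact (bar (hgen n)) a x = Lbw n u x"
  unfolding Lbw_def
  by (rule braid_indep[where n=n]) (auto intro: bar_comm bar_braid rw_reduced reduced_Sn)

lemma hmul_Lw: "hmul n x y = (\<lambda>u. \<Sum>w\<in>Sn n. x w * Lw n w y u)"
  by (simp add: hmul_def hact_def Lw_def)

lemma Lw_gstep:
  assumes w: "w \<in> Sn n" and i: "1 \<le> i" "i < n"
  shows "Lw n (gstep i w) y = hgen n i (Lw n w y)"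
proof (cases "inv w i < inv w (Suc i)")
  case True
  have r: "reduced_word n (sref i \<circ> w) (i # rw n w)"
    using reduced_Cons_intro[OF rw_reduced[OF w] i True] .
  show ?thesis using Lw_indep[OF r, of y, symmetric] True by (simp add: gstep_def Lw_def)
next
  case False
  then have dn: "inv w (Suc i) < inv w i" using inv_Sn_ne[OF w, of i "Suc i"] by auto
  let ?w' = "sref i \<circ> w"
  have w': "?w' \<in> Sn n" using sref_Sn w i by blast
  have r: "reduced_word n w (i # rw n ?w')"
    using desc_reduced[OF rw_reduced[OF w'] dn i w] .
  have e: "Lw n w y = hgen n i (Lw n ?w' y)" using Lw_indep[OF r, of y] by (simp add: Lw_def)
  have "Lw n (gstep i w) y = Lw n w y" using False by (simp add: gstep_def)
  also have "\<dots> = hgen n i (hgen n i (Lw n ?w' y))" using e by (simp add: hgen_idem[OF i])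
  also have "\<dots> = hgen n i (Lw n w y)" using e by simp
  finally show ?thesis .
qed

lemma hmul_hgen:
  assumes i: "1 \<le> i" "i < n"
  shows "hmul n (hgen n i x) y = hgen n i (hmul n x y)"
proof -
  have "hmul n (hgen n i x) y = (\<lambda>u. \<Sum>w'\<in>Sn n. (\<Sum>w\<in>Sn n. x w * hb (gstep i w) w') * Lw n w' y u)"
    by (simp add: hmul_Lw hgen_gstep[OF i])
  also have "\<dots> = (\<lambda>u. \<Sum>w\<in>Sn n. x w * (\<Sum>w'\<in>Sn n. hb (gstep i w) w' * Lw n w' y u))"
    by (auto simp: fun_eq_iff sum_distrib_right sum_distrib_left mult.assoc intro: sum.swap)
  also have "\<dots> = (\<lambda>u. \<Sum>w\<in>Sn n. x w * Lw n (gstep i w) y u)"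
    using i by (intro ext sum.cong refl) (simp add: hb_sum_left Sn_finite gstep_Sn)
  also have "\<dots> = (\<lambda>u. \<Sum>w\<in>Sn n. x w * hgen n i (Lw n w y) u)"
    using i by (intro ext sum.cong refl) (simp add: Lw_gstep)
  also have "\<dots> = hgen n i (hmul n x y)"
    by (simp add: hmul_Lw hgen_sum[OF Sn_finite])
  finally show ?thesis .
qed

lemma hmul_diff1: "hmul n (\<lambda>u. x u - x' u) y = (\<lambda>u. hmul n x y u - hmul n x' y u)"
  by (simp add: hmul_Lw left_diff_distrib sum_subtractf)

lemma hmul_sum1: "finite K \<Longrightarrow> hmul n (\<lambda>u. \<Sum>k\<in>K. c k * f k u) y = (\<lambda>u. \<Sum>k\<in>K. c k * hmul n (f k) y u)"
  by (auto simp: hmul_Lw fun_eq_iff sum_distrib_right sum_distrib_left mult.assoc intro: sum.swap)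

lemma hmul_bar:
  assumes i: "1 \<le> i" "i < n"
  shows "hmul n (bar (hgen n) i x) y = bar (hgen n) i (hmul n x y)"
  by (simp add: bar_apply hmul_diff1 hmul_hgen[OF i])

lemma hmul_id: "hmul n (hb id) y = y"
  by (simp add: hmul_Lw hb_sum_left Sn_finite Lw_def)

lemma hmul_wact_bar: "set ws \<subseteq> {1..<n} \<Longrightarrow> hmul n (wact (bar (hgen n)) ws (hb id)) y = wact (bar (hgen n)) ws y"
  by (induction ws) (auto simp: hmul_id hmul_bar)

lemma hmul_wact: "set ws \<subseteq> {1..<n} \<Longrightarrow> hmul n (wact (hgen n) ws (hb id)) y = wact (hgen n) ws y"
  by (induction ws) (auto simp: hmul_id hmul_hgen)

lemma wact_hgen_up: "reduced_word n u ws \<Longrightarrow> wact (hgen n) ws (hb id) = (hb u :: perm \<Rightarrow> 'a::field)"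
proof (induction ws arbitrary: u)
  case Nil then show ?case by (simp add: reduced_word_def)
next
  case (Cons i ws)
  note A = reduced_Cons[OF Cons.prems]
  let ?x = "sref i \<circ> u"
  have x: "?x \<in> Sn n" using A sref_Sn by blast
  have up: "inv ?x i < inv ?x (Suc i)" using A(2) by (simp add: inv_sref_comp[OF A(5)] sref_apply)
  have "wact (hgen n) (i # ws) (hb id :: perm \<Rightarrow> 'a) = hgen n i (wact (hgen n) ws (hb id))" by simp
  also have "\<dots> = hgen n i (hb ?x)" by (subst Cons.IH[OF A(1)]) (rule refl)
  also have "\<dots> = hb (gstep i ?x)" using hgen_hb_step[OF x A(3,4)] .
  also have "gstep i ?x = u" using up by (simp add: gstep_def)
  finally show ?case .
qed


definition sb :: "nat set \<Rightarrow> nat \<Rightarrow> nat \<Rightarrow> bool" where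
  "sb D p q \<longleftrightarrow> (\<forall>d\<in>D. d < p \<longleftrightarrow> d < q)"

definition bi :: "nat set \<Rightarrow> nat \<Rightarrow> nat" where
  "bi D p = card {d\<in>D. d < p}"

definition lo :: "nat set \<Rightarrow> nat \<Rightarrow> nat" where
  "lo D p = Max (insert 0 {d\<in>D. d < p})"

definition hi :: "nat set \<Rightarrow> nat \<Rightarrow> nat \<Rightarrow> nat" where
  "hi D n p = Min (insert n {d\<in>D. p \<le> d})"

definition zz :: "nat set \<Rightarrow> nat \<Rightarrow> perm" where
  "zz D n p = (if 1 \<le> p \<and> p \<le> n then lo D p + hi D n p + 1 - p else p)"

lemma sb_refl[simp]: "sb D p p" by (simp add: sb_def)
lemma sb_sym: "sb D p q \<Longrightarrow> sb D q p" by (simp add: sb_def)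
lemma sb_trans: "sb D p q \<Longrightarrow> sb D q r \<Longrightarrow> sb D p r" by (simp add: sb_def)

lemma sb_between: "sb D p q \<Longrightarrow> p \<le> r \<Longrightarrow> r \<le> q \<Longrightarrow> sb D p r"
  unfolding sb_def by (meson le_less_trans less_le_trans)

lemma not_sb: "p < q \<Longrightarrow> \<not> sb D p q \<Longrightarrow> \<exists>d\<in>D. p \<le> d \<and> d < q"
  unfolding sb_def by (meson leI less_trans)

lemma sb_no_d: "sb D p q \<Longrightarrow> d \<in> D \<Longrightarrow> p \<le> d \<Longrightarrow> \<not> d < q"
  unfolding sb_def by auto

lemma sb_Suc: "sb D r (Suc r) \<longleftrightarrow> r \<notin> D"
  unfolding sb_def by (auto simp: less_Suc_eq)

context
  fixes D :: "nat set" and n :: nat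
  assumes Dsub: "D \<subseteq> {1..<n}"
begin

lemma finD: "finite D" using Dsub finite_subset by blast

lemma lo_ge: "d \<in> D \<Longrightarrow> d < p \<Longrightarrow> d \<le> lo D p"
  unfolding lo_def using finD by (auto intro: Max_ge)

lemma lo_less: "1 \<le> p \<Longrightarrow> lo D p < p"
  unfolding lo_def using finD by (subst Max_less_iff) auto

lemma lo_cases: "lo D p = 0 \<or> (lo D p \<in> D \<and> lo D p < p)"
proof -
  have "lo D p \<in> insert 0 {d\<in>D. d < p}" unfolding lo_def using finD by (intro Max_in) auto
  then show ?thesis by auto
qed

lemma hi_le: "d \<in> D \<Longrightarrow> p \<le> d \<Longrightarrow> hi D n p \<le> d"
  unfolding hi_def using finD by (auto intro: Min_le)

lemma hi_le_n: "hi D n p \<le> n"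
  unfolding hi_def using finD by (auto intro: Min_le)

lemma hi_ge: "p \<le> n \<Longrightarrow> p \<le> hi D n p"
  unfolding hi_def using finD by (subst Min_ge_iff) auto

lemma hi_cases: "hi D n p = n \<or> (hi D n p \<in> D \<and> p \<le> hi D n p)"
proof -
  have "hi D n p \<in> insert n {d\<in>D. p \<le> d}" unfolding hi_def using finD by (intro Min_in) auto
  then show ?thesis by auto
qed

lemma sb_lo: "sb D p q \<Longrightarrow> lo D p = lo D q"
proof -
  assume "sb D p q"
  then have "{d\<in>D. d < p} = {d\<in>D. d < q}" unfolding sb_def by auto
  then show ?thesis unfolding lo_def by simp
qed

lemma sb_hi: "sb D p q \<Longrightarrow> hi D n p = hi D n q"
proof -
  assume "sb D p q"
  then have "{d\<in>D. p \<le> d} = {d\<in>D. q \<le> d}" unfolding sb_def by (auto simp: not_less[symmetric])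
  then show ?thesis unfolding hi_def by simp
qed

lemma sb_iff: "1 \<le> p \<Longrightarrow> p \<le> n \<Longrightarrow> 1 \<le> q \<Longrightarrow> q \<le> n \<Longrightarrow> sb D p q \<longleftrightarrow> lo D p < q \<and> q \<le> hi D n p"
proof
  assume p: "1 \<le> p" "p \<le> n" and q: "1 \<le> q" "q \<le> n" and s: "sb D p q"
  show "lo D p < q \<and> q \<le> hi D n p" using sb_lo[OF s] sb_hi[OF s] lo_less[OF q(1)] hi_ge[OF q(2)] by simp
next
  assume p: "1 \<le> p" "p \<le> n" and q: "1 \<le> q" "q \<le> n" and c: "lo D p < q \<and> q \<le> hi D n p"
  show "sb D p q" unfolding sb_def
  proof
    fix d assume d: "d \<in> D"
    show "d < p \<longleftrightarrow> d < q"
    proof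
      assume "d < p" then show "d < q" using lo_ge[OF d] c by fastforce
    next
      assume dq: "d < q"
      show "d < p"
      proof (rule ccontr)
        assume "\<not> d < p" then have "hi D n p \<le> d" using hi_le[OF d] by simp
        then show False using dq c by simp
      qed
    qed
  qed
qed

lemma zz_range: "1 \<le> p \<Longrightarrow> p \<le> n \<Longrightarrow> lo D p < zz D n p \<and> zz D n p \<le> hi D n p"
  using lo_less[of p] hi_ge[of p] unfolding zz_def by simp arith

lemma zz_in: "1 \<le> p \<Longrightarrow> p \<le> n \<Longrightarrow> 1 \<le> zz D n p \<and> zz D n p \<le> n"
  using zz_range[of p] hi_le_n[of p] by auto

lemma zz_sb: "1 \<le> p \<Longrightarrow> p \<le> n \<Longrightarrow> sb D p (zz D n p)"
  using sb_iff zz_range zz_in by blast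

lemma zz_zz: "zz D n (zz D n p) = p"
proof (cases "1 \<le> p \<and> p \<le> n")
  case True
  then have s: "sb D p (zz D n p)" and r: "1 \<le> zz D n p \<and> zz D n p \<le> n" using zz_sb zz_in by auto
  have "zz D n (zz D n p) = lo D p + hi D n p + 1 - zz D n p"
    using r sb_lo[OF s] sb_hi[OF s] by (simp add: zz_def)
  also have "\<dots> = p" using zz_range[of p] True unfolding zz_def by simp arith
  finally show ?thesis .
qed (auto simp: zz_def)

lemma zz_Sn: "zz D n \<in> Sn n"
  unfolding Sn_def permutes_def
proof (intro CollectI conjI allI impI)
  fix x assume "x \<notin> {1..n}" then show "zz D n x = x" by (auto simp: zz_def)
next
  fix y show "\<exists>!x. zz D n x = y"
    by (rule ex1I[of _ "zz D n y"]) (auto simp: zz_zz dest: arg_cong[of _ _ "zz D n"])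
qed

lemma zz_inv: "inv (zz D n) = zz D n"
  by (rule inv_equality) (simp_all add: zz_zz)

lemma zz_rev: "1 \<le> p \<Longrightarrow> p < q \<Longrightarrow> q \<le> n \<Longrightarrow> sb D p q \<Longrightarrow> zz D n q < zz D n p"
  using sb_lo[of p q] sb_hi[of p q] zz_range[of q] hi_ge[of q] by (auto simp: zz_def)

lemma zz_cross: "1 \<le> p \<Longrightarrow> p < q \<Longrightarrow> q \<le> n \<Longrightarrow> \<not> sb D p q \<Longrightarrow> zz D n p < zz D n q"
proof -
  assume a: "1 \<le> p" "p < q" "q \<le> n" "\<not> sb D p q"
  obtain d where d: "d \<in> D" "p \<le> d" "d < q" using not_sb[OF a(2,4)] by blast
  have "zz D n p \<le> hi D n p" using zz_range a by simp
  also have "\<dots> \<le> d" using hi_le d by simp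
  also have "d \<le> lo D q" using lo_ge d by simp
  also have "\<dots> < zz D n q" using zz_range a by simp
  finally show ?thesis .
qed

lemma bi_eq_iff: "bi D p = bi D q \<longleftrightarrow> sb D p q"
proof -
  have fin: "finite {d\<in>D. d < x}" for x using finD by simp
  have sub: "x \<le> y \<Longrightarrow> {d\<in>D. d < x} \<subseteq> {d\<in>D. d < y}" for x y by auto
  have "bi D p = bi D q \<longleftrightarrow> {d\<in>D. d < p} = {d\<in>D. d < q}"
  proof
    assume e: "bi D p = bi D q"
    show "{d\<in>D. d < p} = {d\<in>D. d < q}"
    proof (cases "p \<le> q")
      case True then show ?thesis using card_subset_eq[OF fin sub[OF True]] e by (simp add: bi_def)
    next
      case False then have "q \<le> p" by simp
      from card_subset_eq[OF fin[of p] sub[OF this]] e show ?thesis by (simp add: bi_def)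
    qed
  qed (simp add: bi_def)
  also have "\<dots> \<longleftrightarrow> sb D p q" unfolding sb_def by blast
  finally show ?thesis .
qed

lemma bi_mono: "p \<le> q \<Longrightarrow> bi D p \<le> bi D q"
  unfolding bi_def using finD by (intro card_mono) auto

lemma bi_less_imp: "bi D p < bi D q \<Longrightarrow> p < q"
proof (rule ccontr)
  assume "bi D p < bi D q" "\<not> p < q"
  then show False using bi_mono[of q p] by simp
qed

lemma bi_less_iff: "bi D p < bi D q \<longleftrightarrow> p < q \<and> \<not> sb D p q"
proof
  assume a: "bi D p < bi D q"
  then show "p < q \<and> \<not> sb D p q" using bi_less_imp[OF a] bi_eq_iff[of p q] by simp
next
  assume a: "p < q \<and> \<not> sb D p q"
  then show "bi D p < bi D q" using bi_mono[of p q] bi_eq_iff[of p q] by simp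
qed

lemma chain_dec:
  fixes u :: perm
  assumes "\<And>r. p \<le> r \<Longrightarrow> r < q \<Longrightarrow> u (Suc r) < u r" and "p < q"
  shows "u q < u p"
  using assms
proof (induction q rule: less_induct)
  case (less q)
  show ?case
  proof (cases "Suc p = q")
    case True then show ?thesis using less.prems(1)[of p] by auto
  next
    case False
    then have "u (q - 1) < u p" using less by (intro less.IH) auto
    moreover have "u q < u (q - 1)" using less.prems(1)[of "q - 1"] less.prems(2) by simp
    ultimately show ?thesis by linarith
  qed
qed

lemma chain_inc:
  fixes u :: perm
  assumes "\<And>r. p \<le> r \<Longrightarrow> r < q \<Longrightarrow> u r < u (Suc r)" and "p < q"
  shows "u p < u q"
  using assms
proof (induction q rule: less_induct)
  case (less q)
  show ?case
  proof (cases "Suc p = q")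
    case True then show ?thesis using less.prems(1)[of p] by auto
  next
    case False
    then have "u p < u (q - 1)" using less by (intro less.IH) auto
    moreover have "u (q - 1) < u q" using less.prems(1)[of "q - 1"] less.prems(2) by simp
    ultimately show ?thesis by linarith
  qed
qed

lemma sb_inner: "sb D p q \<Longrightarrow> p \<le> r \<Longrightarrow> r < q \<Longrightarrow> r \<notin> D"
  unfolding sb_def by auto

lemma block_dec:
  assumes J: "{1..<n} - D \<subseteq> pdes n u" and pq: "1 \<le> p" "p < q" "q \<le> n" "sb D p q"
  shows "u q < u p"
proof (rule chain_dec[OF _ pq(2)])
  fix r assume r: "p \<le> r" "r < q"
  have "r \<in> {1..<n} - D" using sb_inner[OF pq(4) r] r pq by auto
  then show "u (Suc r) < u r" using J by (auto simp: pdes_def)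
qed

lemma block_inc:
  assumes u: "u \<in> Sn n" and J: "pdes n u \<subseteq> D" and pq: "1 \<le> p" "p < q" "q \<le> n" "sb D p q"
  shows "u p < u q"
proof (rule chain_inc[OF _ pq(2)])
  fix r assume r: "p \<le> r" "r < q"
  have "r \<notin> D" using sb_inner[OF pq(4) r] .
  then have "r \<notin> pdes n u" using J by auto
  moreover have "1 \<le> r" "r < n" using r pq by auto
  moreover have "u r \<noteq> u (Suc r)" using Sn_inj[OF u] by simp
  ultimately show "u r < u (Suc r)" using J by (auto simp: pdes_def)
qed

end


lemma card_le_val:
  assumes u: "u \<in> Sn n" and p: "1 \<le> p" "p \<le> n"
  shows "card {q\<in>{1..n}. u q \<le> u p} = u p"
proof -
  have up: "u p \<in> {1..n}" using Sn_range[OF u] p by simp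
  have "u ` {q\<in>{1..n}. u q \<le> u p} = {1..u p}"
  proof
    show "u ` {q\<in>{1..n}. u q \<le> u p} \<subseteq> {1..u p}"
    proof
      fix y assume "y \<in> u ` {q\<in>{1..n}. u q \<le> u p}"
      then obtain q where q: "q \<in> {1..n}" "u q \<le> u p" "y = u q" by auto
      then have "u q \<in> {1..n}" using Sn_range[OF u] by blast
      then show "y \<in> {1..u p}" using q by auto
    qed
    show "{1..u p} \<subseteq> u ` {q\<in>{1..n}. u q \<le> u p}"
    proof
      fix y assume y: "y \<in> {1..u p}"
      then have yn: "y \<in> {1..n}" using up by auto
      have "inv u y \<in> {1..n}" using Sn_range[OF Sn_inv[OF u] yn] .
      moreover have "u (inv u y) = y" using Sn_inv1[OF u] .
      ultimately show "y \<in> u ` {q\<in>{1..n}. u q \<le> u p}" using y by (intro image_eqI[of y u "inv u y"]) auto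
    qed
  qed
  moreover have "inj_on u {q\<in>{1..n}. u q \<le> u p}" using Sn_inj[OF u] by (auto simp: inj_on_def)
  ultimately show ?thesis using card_image by (metis card_atLeastAtMost diff_Suc_1)
qed

lemma perm_eq_cmp:
  assumes u: "u \<in> Sn n" and z: "z \<in> Sn n"
    and c: "\<And>p q. 1 \<le> p \<Longrightarrow> p \<le> n \<Longrightarrow> 1 \<le> q \<Longrightarrow> q \<le> n \<Longrightarrow> (u q \<le> u p \<longleftrightarrow> z q \<le> z p)"
  shows "u = z"
proof
  fix p
  show "u p = z p"
  proof (cases "1 \<le> p \<and> p \<le> n")
    case True
    have "{q\<in>{1..n}. u q \<le> u p} = {q\<in>{1..n}. z q \<le> z p}" using c True by auto
    then have "card {q\<in>{1..n}. u q \<le> u p} = card {q\<in>{1..n}. z q \<le> z p}" by simp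
    then show ?thesis using card_le_val[OF u, of p] card_le_val[OF z, of p] True by simp
  next
    case False then show ?thesis using Sn_out[OF u] Sn_out[OF z] by auto
  qed
qed

lemma cmp_invs:
  assumes x: "x \<in> Sn n" and p: "1 \<le> p" "p \<le> n" and q: "1 \<le> q" "q \<le> n"
  shows "x q \<le> x p \<longleftrightarrow> (q = p \<or> (p < q \<and> (p, q) \<in> invs n x) \<or> (q < p \<and> (q, p) \<notin> invs n x))"
  using Sn_inj[OF x, of p q] p q by (auto simp: invs_def)

lemma invs_eq_perm_eq:
  assumes "u \<in> Sn n" "z \<in> Sn n" "invs n u = invs n z" shows "u = z"
  by (rule perm_eq_cmp[OF assms(1,2)]) (use cmp_invs[OF assms(1)] cmp_invs[OF assms(2)] assms(3) in simp)

lemma min_des_id: "min_des_perm n {} = id"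
proof -
  let ?P = "\<lambda>w. w \<in> Sn n \<and> pdes n w = {} \<and> (\<forall>u\<in>Sn n. pdes n u = {} \<longrightarrow> perm_len n w \<le> perm_len n u)"
  have "?P id" by (simp add: pdes_def)
  from someI[where P="?P", OF this] have "?P (min_des_perm n {})" unfolding min_des_perm_def .
  then have "min_des_perm n {} \<in> Sn n" "perm_len n (min_des_perm n {}) = 0"
    using \<open>?P id\<close> by auto
  then show ?thesis using perm_len_zero by blast
qed

lemma word_perm_append: "word_perm (xs @ ys) = word_perm xs \<circ> word_perm ys"
  by (induction xs) auto

definition SBset :: "nat set \<Rightarrow> nat \<Rightarrow> (nat \<times> nat) set" where
  "SBset D n = {(p, q). 1 \<le> p \<and> p < q \<and> q \<le> n \<and> sb D p q}"

context
  fixes D :: "nat set" and n :: nat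
  assumes Dsub: "D \<subseteq> {1..<n}"
begin

lemma pdes_zz: "pdes n (zz D n) = {1..<n} - D"
proof (rule set_eqI)
  fix i
  show "i \<in> pdes n (zz D n) \<longleftrightarrow> i \<in> {1..<n} - D"
  proof (cases "1 \<le> i \<and> i < n")
    case True
    then show ?thesis
      using zz_rev[OF Dsub, of i "Suc i"] zz_cross[OF Dsub, of i "Suc i"] sb_Suc[of D i]
      by (auto simp: pdes_def)
  qed (auto simp: pdes_def)
qed

lemma invs_zz: "invs n (zz D n) = SBset D n"
proof (rule set_eqI, clarify)
  fix p q
  show "(p, q) \<in> invs n (zz D n) \<longleftrightarrow> (p, q) \<in> SBset D n"
  proof (cases "1 \<le> p \<and> p < q \<and> q \<le> n")
    case True then show ?thesis
    proof (cases "sb D p q")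
      case True then show ?thesis using zz_rev[OF Dsub, of p q] \<open>1 \<le> p \<and> p < q \<and> q \<le> n\<close>
        by (auto simp: invs_def SBset_def)
    next
      case False then show ?thesis using zz_cross[OF Dsub, of p q] \<open>1 \<le> p \<and> p < q \<and> q \<le> n\<close>
        by (auto simp: invs_def SBset_def)
    qed
  qed (auto simp: invs_def SBset_def)
qed

lemma SB_sub_invs: "{1..<n} - D \<subseteq> pdes n u \<Longrightarrow> SBset D n \<subseteq> invs n u"
  unfolding SBset_def invs_def using block_dec[OF Dsub] by auto

lemma finite_SB: "finite (SBset D n)"
  unfolding SBset_def by (rule finite_subset[of _ "{1..n} \<times> {1..n}"]) auto

lemma min_des_zz: "min_des_perm n ({1..<n} - D) = zz D n"
proof -
  let ?J = "{1..<n} - D"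
  let ?P = "\<lambda>w. w \<in> Sn n \<and> pdes n w = ?J \<and> (\<forall>u\<in>Sn n. pdes n u = ?J \<longrightarrow> perm_len n w \<le> perm_len n u)"
  have "?P (zz D n)"
  proof (intro conjI ballI impI)
    show "zz D n \<in> Sn n" by (rule zz_Sn[OF Dsub])
    show "pdes n (zz D n) = ?J" by (rule pdes_zz)
    fix u assume "u \<in> Sn n" "pdes n u = ?J"
    then have "SBset D n \<subseteq> invs n u" using SB_sub_invs by simp
    then show "perm_len n (zz D n) \<le> perm_len n u"
      by (simp add: perm_len_invs invs_zz card_mono)
  qed
  from someI[where P="?P", OF this] have Pm: "?P (min_des_perm n ?J)" unfolding min_des_perm_def .
  let ?m = "min_des_perm n ?J"
  have sub: "SBset D n \<subseteq> invs n ?m" using Pm SB_sub_invs by simp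
  have "perm_len n ?m \<le> perm_len n (zz D n)" using Pm zz_Sn[OF Dsub] pdes_zz by blast
  then have "card (invs n ?m) \<le> card (SBset D n)" by (simp add: perm_len_invs invs_zz)
  then have "invs n ?m = SBset D n" using card_seteq[OF finite_invs sub] by simp
  then show ?thesis using invs_eq_perm_eq[of ?m n "zz D n"] Pm zz_Sn[OF Dsub] invs_zz by simp
qed

lemma len_add_zz:
  assumes w: "w \<in> Sn n" and des: "pdes n w \<subseteq> D"
  shows "perm_len n (w \<circ> zz D n) = perm_len n w + perm_len n (zz D n)"
proof (rule antisym)
  let ?z = "zz D n"
  have z: "?z \<in> Sn n" by (rule zz_Sn[OF Dsub])
  have ws: "word_perm (rw n w @ rw n ?z) = w \<circ> ?z"
    using rw_reduced[OF w] rw_reduced[OF z]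
    by (simp add: reduced_word_def word_perm_append)
  show "perm_len n (w \<circ> ?z) \<le> perm_len n w + perm_len n ?z"
    using len_word_le[of "rw n w @ rw n ?z" n] rw_reduced[OF w] rw_reduced[OF z] ws
    by (simp add: reduced_word_def)
  let ?g = "\<lambda>(p, q). (?z p, ?z q)"
  have cross: "\<not> sb D a b" if "(a, b) \<in> invs n w" for a b
    using that block_inc[OF Dsub w des, of a b] by (auto simp: invs_def)
  have gsub: "?g ` invs n w \<subseteq> invs n (w \<circ> ?z)"
  proof
    fix x assume "x \<in> ?g ` invs n w"
    then obtain a b where ab: "(a, b) \<in> invs n w" and x: "x = (?z a, ?z b)" by auto
    have ab': "1 \<le> a" "a < b" "b \<le> n" "w b < w a" using ab by (auto simp: invs_def)
    have "?z a < ?z b" using zz_cross[OF Dsub ab'(1,2,3) cross[OF ab]] .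
    moreover have "1 \<le> ?z a" "?z b \<le> n" using zz_in[OF Dsub, of a] zz_in[OF Dsub, of b] ab' by auto
    ultimately show "x \<in> invs n (w \<circ> ?z)" using ab' x by (simp add: invs_def zz_zz[OF Dsub])
  qed
  have sbsub: "SBset D n \<subseteq> invs n (w \<circ> ?z)"
  proof
    fix x assume "x \<in> SBset D n"
    then obtain p q where pq: "1 \<le> p" "p < q" "q \<le> n" "sb D p q" and x: "x = (p, q)" by (auto simp: SBset_def)
    have lt: "?z q < ?z p" using zz_rev[OF Dsub pq] .
    have s: "sb D (?z q) (?z p)"
      using sb_trans[OF sb_trans[OF sb_sym[OF zz_sb[OF Dsub, of q]] sb_sym[OF pq(4)]] zz_sb[OF Dsub, of p]] pq by simp
    have "w (?z q) < w (?z p)"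
      using block_inc[OF Dsub w des _ lt _ s] zz_in[OF Dsub, of q] zz_in[OF Dsub, of p] pq by auto
    then show "x \<in> invs n (w \<circ> ?z)" using pq x by (simp add: invs_def)
  qed
  have disj: "SBset D n \<inter> ?g ` invs n w = {}"
  proof (rule ccontr)
    assume "SBset D n \<inter> ?g ` invs n w \<noteq> {}"
    then obtain a b where ab: "(a, b) \<in> invs n w" and s: "(?z a, ?z b) \<in> SBset D n" by auto
    have ab': "1 \<le> a" "a < b" "b \<le> n" using ab by (auto simp: invs_def)
    have "sb D (?z a) (?z b)" using s by (simp add: SBset_def)
    then have "sb D a b" using sb_trans[OF sb_trans[OF zz_sb[OF Dsub, of a] \<open>sb D (?z a) (?z b)\<close>] sb_sym[OF zz_sb[OF Dsub, of b]]] ab' by simp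
    then show False using cross[OF ab] by simp
  qed
  have inj: "inj_on ?g (invs n w)" using Sn_inj[OF z] by (auto simp: inj_on_def)
  have "perm_len n w + perm_len n ?z = card (?g ` invs n w) + card (SBset D n)"
    by (simp add: perm_len_invs invs_zz card_image[OF inj])
  also have "\<dots> = card (SBset D n \<union> ?g ` invs n w)"
    using disj finite_SB by (simp add: card_Un_disjoint)
  also have "\<dots> \<le> perm_len n (w \<circ> ?z)"
    unfolding perm_len_invs by (rule card_mono) (use gsub sbsub in auto)
  finally show "perm_len n w + perm_len n ?z \<le> perm_len n (w \<circ> ?z)" .
qed

end


lemma cdes_sub: assumes "is_composition n \<alpha>" shows "cdes \<alpha> \<subseteq> {1..<n}"
proof
  fix d assume "d \<in> cdes \<alpha>"
  then obtain k where k: "1 \<le> k" "k < length \<alpha>" "d = sum_list (take k \<alpha>)" by (auto simp: cdes_def)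
  have pos: "\<forall>x\<in>set \<alpha>. 0 < x" and sn: "sum_list \<alpha> = n" using assms by (auto simp: is_composition_def)
  have t: "take k \<alpha> \<noteq> []" and dr: "drop k \<alpha> \<noteq> []" using k by auto
  have "sum_list (take k \<alpha>) \<noteq> 0"
    using t pos by (metis in_set_takeD neq0_conv sum_list_eq_0_iff last_in_set)
  then have t0: "0 < sum_list (take k \<alpha>)" by presburger
  have "sum_list (drop k \<alpha>) \<noteq> 0"
    using dr pos by (metis in_set_dropD neq0_conv sum_list_eq_0_iff last_in_set)
  then have d0: "0 < sum_list (drop k \<alpha>)" by presburger
  have "sum_list (take k \<alpha>) + sum_list (drop k \<alpha>) = n"
    using sn by (metis append_take_drop_id sum_list_append)
  then show "d \<in> {1..<n}" using k t0 d0 by simp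
qed

lemma w0c_eq: "is_composition n \<alpha> \<Longrightarrow> w0c n \<alpha> = zz (cdes \<alpha>) n"
  unfolding w0c_def by (rule min_des_zz[OF cdes_sub])

lemma cdes_single: "cdes [m] = {}" by (simp add: cdes_def)

lemma w0_single: "w0 n [n] = id"
  by (simp add: w0_def cdes_single min_des_id)

lemma pi_w_hb: "u \<in> Sn n \<Longrightarrow> pi_w n u = hb u"
  by (simp add: pi_w_def wact_hgen_up rw_reduced)

lemma pibar_id: "pibar_w n id = hb id"
  by (simp add: pibar_w_def)

lemma blk_bi: "blk \<alpha> w x = bi (cdes \<alpha>) (inv w x)"
  by (simp add: blk_def bi_def)

lemma OP_Sn: "w \<in> OP n \<alpha> \<Longrightarrow> w \<in> Sn n" by (simp add: OP_def)
lemma OP_des: "w \<in> OP n \<alpha> \<Longrightarrow> pdes n w \<subseteq> cdes \<alpha>" by (simp add: OP_def)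
lemma OP_finite: "finite (OP n \<alpha>)" using Sn_finite by (simp add: OP_def)
lemma id_OP: "id \<in> OP n \<alpha>" by (simp add: OP_def pdes_def)

lemma inv_range: "w \<in> Sn n \<Longrightarrow> 1 \<le> x \<Longrightarrow> x \<le> n \<Longrightarrow> 1 \<le> inv w x \<and> inv w x \<le> n"
  using Sn_range[OF Sn_inv, of w n x] by auto

context
  fixes D :: "nat set" and n :: nat
  assumes Dsub: "D \<subseteq> {1..<n}"
begin

lemma sameblock_adj:
  assumes w: "w \<in> Sn n" and des: "pdes n w \<subseteq> D" and i: "1 \<le> i" "i < n"
    and s: "sb D (inv w i) (inv w (Suc i))"
  shows "inv w (Suc i) = Suc (inv w i)"
proof -
  let ?a = "inv w i" and ?b = "inv w (Suc i)"
  have a: "1 \<le> ?a" "?a \<le> n" and b: "1 \<le> ?b" "?b \<le> n" using inv_range[OF w] i by auto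
  have wa: "w ?a = i" and wb: "w ?b = Suc i" using Sn_inv1[OF w] by auto
  have ne: "?a \<noteq> ?b" using inv_Sn_ne[OF w, of i "Suc i"] by simp
  show ?thesis
  proof (cases "?a < ?b")
    case True
    show ?thesis
    proof (rule ccontr)
      assume "?b \<noteq> Suc ?a"
      then have lt: "Suc ?a < ?b" using True by simp
      have s1: "sb D ?a (Suc ?a)" using sb_between[OF s, of "Suc ?a"] lt by simp
      have s2: "sb D (Suc ?a) ?b" using sb_trans[OF sb_sym[OF s1] s] .
      have "w ?a < w (Suc ?a)" using block_inc[OF Dsub w des a(1) _ _ s1] lt b by simp
      moreover have "w (Suc ?a) < w ?b" using block_inc[OF Dsub w des _ lt b(2) s2] a by simp
      ultimately show False using wa wb by simp
    qed
  next
    case False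
    then have "?b < ?a" using ne by simp
    then have "w ?b < w ?a" using block_inc[OF Dsub w des b(1) _ a(2) sb_sym[OF s]] by simp
    then show ?thesis using wa wb by simp
  qed
qed

lemma OP_up:
  assumes w: "w \<in> Sn n" and des: "pdes n w \<subseteq> D" and i: "1 \<le> i" "i < n"
    and up: "inv w i < inv w (Suc i)" and ns: "\<not> sb D (inv w i) (inv w (Suc i))"
  shows "pdes n (sref i \<circ> w) \<subseteq> D"
proof
  fix r assume r: "r \<in> pdes n (sref i \<circ> w)"
  then have r1: "1 \<le> r" "r < n" and lt: "sref i (w (Suc r)) < sref i (w r)" by (auto simp: pdes_def)
  show "r \<in> D"
  proof (cases "w (Suc r) = Suc i \<and> w r = i")
    case True
    then have "inv w i = r" "inv w (Suc i) = Suc r" using Sn_inv2[OF w] by metis+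
    then show ?thesis using ns sb_Suc[of D r] by simp
  next
    case False
    then have "w (Suc r) < w r" using lt sref_less_iff[of i "w (Suc r)" "w r"] by auto
    then show ?thesis using des r1 by (auto simp: pdes_def)
  qed
qed

end

lemma sref_pos:
  assumes w: "w \<in> Sn n" and adj: "inv w (Suc i) = Suc (inv w i)"
  shows "sref i \<circ> w = w \<circ> sref (inv w i)"
proof
  fix p
  let ?a = "inv w i"
  have wa: "w ?a = i" and wb: "w (Suc ?a) = Suc i" using Sn_inv1[OF w] adj by (metis)+
  show "(sref i \<circ> w) p = (w \<circ> sref ?a) p"
  proof (cases "p = ?a \<or> p = Suc ?a")
    case True then show ?thesis using wa wb by (auto simp: sref_apply)
  next
    case False
    then have "w p \<noteq> i" "w p \<noteq> Suc i" using wa wb Sn_inj[OF w] by metis+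
    then show ?thesis using False by (simp add: sref_apply)
  qed
qed


definition Fw :: "nat \<Rightarrow> nat list \<Rightarrow> perm \<Rightarrow> perm \<Rightarrow> 'a::field" where
  "Fw n \<alpha> w = wact (bar (hgen n)) (rw n w) (hb (zz (cdes \<alpha>) n))"

definition Phi :: "nat \<Rightarrow> nat list \<Rightarrow> (perm \<Rightarrow> 'a::field) \<Rightarrow> perm \<Rightarrow> 'a" where
  "Phi n \<alpha> v = (\<lambda>u. \<Sum>w\<in>OP n \<alpha>. v w * Fw n \<alpha> w u)"

lemma F_eq:
  assumes comp: "is_composition n \<alpha>" and w: "w \<in> Sn n"
  shows "hmul n (pibar_w n w) (pi_w n (w0c n \<alpha>)) = Fw n \<alpha> w"
proof -
  have "pi_w n (w0c n \<alpha>) = (hb (zz (cdes \<alpha>) n) :: perm \<Rightarrow> 'a::field)"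
    using w0c_eq[OF comp] pi_w_hb zz_Sn[OF cdes_sub[OF comp]] by simp
  then show ?thesis unfolding pibar_w_def Fw_def
    using hmul_wact_bar[OF reduced_set[OF rw_reduced[OF w]]] by simp
qed

lemma bar_zero: "1 \<le> i \<Longrightarrow> i < n \<Longrightarrow> bar (hgen n) i (\<lambda>u. 0) = (\<lambda>u. 0)"
  by (simp add: bar_apply hgen_zero)

lemma wact_bar_zero: "set ws \<subseteq> {1..<n} \<Longrightarrow> wact (bar (hgen n)) ws (\<lambda>u. 0) = (\<lambda>u. 0)"
  by (induction ws) (auto simp: bar_zero)

lemma hgen_bar_zero: assumes "1 \<le> i" "i < n" shows "hgen n i (bar (hgen n) i y) = (\<lambda>u. 0)"
  by (simp add: bar_apply hgen_diff hgen_idem[OF assms])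

lemma Fw_Lbw: "Fw n \<alpha> w = Lbw n w (hb (zz (cdes \<alpha>) n))"
  by (simp add: Fw_def Lbw_def)

lemma Fw_down:
  assumes w: "w \<in> Sn n" and i: "1 \<le> i" "i < n" and dn: "inv w (Suc i) < inv w i"
  shows "hgen n i (Fw n \<alpha> w) = (\<lambda>u. 0)"
proof -
  let ?w' = "sref i \<circ> w"
  have w': "?w' \<in> Sn n" using sref_Sn w i by blast
  have r: "reduced_word n w (i # rw n ?w')" using desc_reduced[OF rw_reduced[OF w'] dn i w] .
  have "(Fw n \<alpha> w :: perm \<Rightarrow> 'a::field) = bar (hgen n) i (wact (bar (hgen n)) (rw n ?w') (hb (zz (cdes \<alpha>) n)))"
    using Lbw_indep[OF r, of "hb (zz (cdes \<alpha>) n) :: perm \<Rightarrow> 'a::field"] by (simp add: Fw_def Lbw_def)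
  then show ?thesis using hgen_bar_zero[OF i] by simp
qed

lemma Fw_up:
  assumes w: "w \<in> Sn n" and i: "1 \<le> i" "i < n" and up: "inv w i < inv w (Suc i)"
  shows "Fw n \<alpha> (sref i \<circ> w) = bar (hgen n) i (Fw n \<alpha> w)"
proof -
  have r: "reduced_word n (sref i \<circ> w) (i # rw n w)" using reduced_Cons_intro[OF rw_reduced[OF w] i up] .
  show ?thesis using Lbw_indep[OF r, of "hb (zz (cdes \<alpha>) n) :: perm \<Rightarrow> 'a::field"] by (simp add: Fw_def Lbw_def)
qed

lemma Fw_same:
  assumes comp: "is_composition n \<alpha>" and w: "w \<in> OP n \<alpha>" and i: "1 \<le> i" "i < n"
    and s: "sb (cdes \<alpha>) (inv w i) (inv w (Suc i))"
  shows "bar (hgen n) i (Fw n \<alpha> w) = (\<lambda>u. 0)"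
proof -
  let ?D = "cdes \<alpha>" and ?z = "zz (cdes \<alpha>) n" and ?a = "inv w i"
  have Dsub: "?D \<subseteq> {1..<n}" using cdes_sub[OF comp] .
  have wS: "w \<in> Sn n" and des: "pdes n w \<subseteq> ?D" using w by (auto simp: OP_def)
  have adj: "inv w (Suc i) = Suc ?a" using sameblock_adj[OF Dsub wS des i s] .
  have a: "1 \<le> ?a" "Suc ?a \<le> n" using inv_range[OF wS, of i] inv_range[OF wS, of "Suc i"] i adj by auto
  have aD: "sb ?D ?a (Suc ?a)" using s adj by simp
  have up: "inv w i < inv w (Suc i)" using adj by simp
  have eq: "sref i \<circ> w = w \<circ> sref ?a" using sref_pos[OF wS adj] .
  have r1: "reduced_word n (sref i \<circ> w) (i # rw n w)" using reduced_Cons_intro[OF rw_reduced[OF wS] i up] .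
  have len: "perm_len n (sref i \<circ> w) = Suc (perm_len n w)" using len_sref_up[OF wS i up] .
  have r2: "reduced_word n (sref i \<circ> w) (rw n w @ [?a])"
    using rw_reduced[OF wS] a len eq by (auto simp: reduced_word_def word_perm_snoc)
  have z: "?z \<in> Sn n" using zz_Sn[OF Dsub] .
  have zrev: "?z (Suc ?a) < ?z ?a" using zz_rev[OF Dsub a(1) _ a(2) aD] by simp
  have gz: "gstep ?a ?z = ?z" using zrev by (simp add: gstep_def zz_inv[OF Dsub])
  have ba: "bar (hgen n) ?a (hb ?z :: perm \<Rightarrow> 'a::field) = (\<lambda>u. 0)"
  proof -
    have a2: "?a < n" using a by simp
    show ?thesis by (simp add: bar_apply hgen_hb_step[OF z a(1) a2] gz)
  qed
  have "bar (hgen n) i (Fw n \<alpha> w :: perm \<Rightarrow> 'a::field) = wact (bar (hgen n)) (i # rw n w) (hb ?z)" by (simp add: Fw_def)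
  also have "\<dots> = wact (bar (hgen n)) (rw n w @ [?a]) (hb ?z)"
    by (simp del: wact_Cons add: Lbw_indep[OF r1] Lbw_indep[OF r2])
  also have "\<dots> = wact (bar (hgen n)) (rw n w) (\<lambda>u. 0)" by (simp add: wact_append ba)
  also have "\<dots> = (\<lambda>u. 0)" using wact_bar_zero reduced_set[OF rw_reduced[OF wS]] by blast
  finally show ?thesis .
qed

lemma sum_hb_two: "finite S \<Longrightarrow> a \<in> S \<Longrightarrow> b \<in> S \<Longrightarrow> a \<noteq> b \<Longrightarrow>
   (\<Sum>w'\<in>S. (hb a w' + hb b w') * f w') = f a + f b"
  by (simp add: distrib_right sum.distrib hb_sum_left)

lemma equivariance:
  assumes comp: "is_composition n \<alpha>" and w: "w \<in> OP n \<alpha>" and i: "1 \<le> i" "i < n"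
  shows "hgen n i (Fw n \<alpha> w) = (\<lambda>u. \<Sum>w'\<in>OP n \<alpha>. op_basis \<alpha> i w w' * Fw n \<alpha> w' u)"
proof -
  let ?D = "cdes \<alpha>" and ?a = "inv w i" and ?b = "inv w (Suc i)"
  have Dsub: "?D \<subseteq> {1..<n}" using cdes_sub[OF comp] .
  have wS: "w \<in> Sn n" and des: "pdes n w \<subseteq> ?D" using w by (auto simp: OP_def)
  consider "bi ?D ?b < bi ?D ?a" | "bi ?D ?a < bi ?D ?b" | "bi ?D ?a = bi ?D ?b" by linarith
  then show ?thesis
  proof cases
    case 1
    then have "?b < ?a" using bi_less_imp[OF Dsub] by blast
    then show ?thesis using Fw_down[OF wS i] 1 by (simp add: op_basis_def blk_bi)
  next
    case 2
    then have up: "?a < ?b" and ns: "\<not> sb ?D ?a ?b" using bi_less_iff[OF Dsub] by blast+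
    have w2: "sref i \<circ> w \<in> OP n \<alpha>" using OP_up[OF Dsub wS des i up ns] sref_Sn[OF wS i] by (simp add: OP_def)
    have ne: "sref i \<circ> w \<noteq> w" using Sn_inv1[OF wS, of i] by (metis comp_apply n_not_Suc_n sref_apply)
    have "(\<lambda>u. \<Sum>w'\<in>OP n \<alpha>. op_basis \<alpha> i w w' * Fw n \<alpha> w' u :: 'a) =
          (\<lambda>u. \<Sum>w'\<in>OP n \<alpha>. (hb w w' + hb (sref i \<circ> w) w') * Fw n \<alpha> w' u)"
      using 2 by (simp add: op_basis_def blk_bi)
    also have "\<dots> = (\<lambda>u. Fw n \<alpha> w u + Fw n \<alpha> (sref i \<circ> w) u)"
      by (rule ext, rule sum_hb_two[OF OP_finite w w2 ne[symmetric]])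
    also have "\<dots> = hgen n i (Fw n \<alpha> w)" by (simp add: Fw_up[OF wS i up] bar_apply)
    finally show ?thesis by simp
  next
    case 3
    then have s: "sb ?D ?a ?b" using bi_eq_iff[OF Dsub] by blast
    have "(\<lambda>u. \<Sum>w'\<in>OP n \<alpha>. op_basis \<alpha> i w w' * Fw n \<alpha> w' u :: 'a) = Fw n \<alpha> w"
      using 3 w by (simp add: op_basis_def blk_bi hb_sum_left OP_finite)
    moreover have "hgen n i (Fw n \<alpha> w) = Fw n \<alpha> w"
      using Fw_same[OF comp w i s] by (simp add: bar_apply fun_eq_iff)
    ultimately show ?thesis by simp
  qed
qed


lemma Phi_opgen:
  assumes comp: "is_composition n \<alpha>" and i: "1 \<le> i" "i < n"
  shows "Phi n \<alpha> (opgen n \<alpha> i v) = hgen n i (Phi n \<alpha> v)"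
proof -
  have "Phi n \<alpha> (opgen n \<alpha> i v) = (\<lambda>u. \<Sum>w'\<in>OP n \<alpha>. (\<Sum>w\<in>OP n \<alpha>. v w * op_basis \<alpha> i w w') * Fw n \<alpha> w' u)"
    by (simp add: Phi_def opgen_def)
  also have "\<dots> = (\<lambda>u. \<Sum>w\<in>OP n \<alpha>. v w * (\<Sum>w'\<in>OP n \<alpha>. op_basis \<alpha> i w w' * Fw n \<alpha> w' u))"
    by (auto simp: fun_eq_iff sum_distrib_right sum_distrib_left mult.assoc intro: sum.swap)
  also have "\<dots> = (\<lambda>u. \<Sum>w\<in>OP n \<alpha>. v w * hgen n i (Fw n \<alpha> w) u)"
    by (intro ext sum.cong refl) (simp add: equivariance[OF comp _ i])
  also have "\<dots> = hgen n i (Phi n \<alpha> v)"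
    by (simp add: Phi_def hgen_sum[OF OP_finite])
  finally show ?thesis .
qed

lemma Phi_wact:
  assumes comp: "is_composition n \<alpha>"
  shows "set ws \<subseteq> {1..<n} \<Longrightarrow> Phi n \<alpha> (wact (opgen n \<alpha>) ws v) = wact (hgen n) ws (Phi n \<alpha> v)"
  by (induction ws) (auto simp: Phi_opgen[OF comp])

lemma Phi_sum:
  "finite K \<Longrightarrow> Phi n \<alpha> (\<lambda>u. \<Sum>k\<in>K. c k * f k u) = (\<lambda>u. \<Sum>k\<in>K. c k * Phi n \<alpha> (f k) u)"
  by (auto simp: Phi_def fun_eq_iff sum_distrib_right sum_distrib_left mult.assoc intro: sum.swap)

lemma Phi_diff: "Phi n \<alpha> (\<lambda>u. x u - y u) = (\<lambda>u. Phi n \<alpha> x u - Phi n \<alpha> y u)"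
  by (simp add: Phi_def fun_eq_iff left_diff_distrib sum_subtractf)

lemma rw_set: "u \<in> Sn n \<Longrightarrow> set (rw n u) \<subseteq> {1..<n}"
  using reduced_set rw_reduced by blast

lemma Phi_hact:
  assumes comp: "is_composition n \<alpha>"
  shows "Phi n \<alpha> (hact n (opgen n \<alpha>) h v) = hmul n h (Phi n \<alpha> v)"
proof -
  have "Phi n \<alpha> (hact n (opgen n \<alpha>) h v) = (\<lambda>u. \<Sum>w\<in>Sn n. h w * Phi n \<alpha> (wact (opgen n \<alpha>) (rw n w) v) u)"
    unfolding hact_def by (rule Phi_sum[OF Sn_finite])
  also have "\<dots> = (\<lambda>u. \<Sum>w\<in>Sn n. h w * wact (hgen n) (rw n w) (Phi n \<alpha> v) u)"
  proof (intro ext sum.cong refl)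
    fix u w assume w: "w \<in> Sn n"
    show "h w * Phi n \<alpha> (wact (opgen n \<alpha>) (rw n w) v) u = h w * wact (hgen n) (rw n w) (Phi n \<alpha> v) u"
      using Phi_wact[OF comp rw_set[OF w], of v] by simp
  qed
  also have "\<dots> = hmul n h (Phi n \<alpha> v)" by (simp add: hmul_Lw Lw_def)
  finally show ?thesis .
qed

lemma op_basis_OP:
  assumes comp: "is_composition n \<alpha>" and w: "w \<in> OP n \<alpha>" and i: "1 \<le> i" "i < n" and u: "u \<notin> OP n \<alpha>"
  shows "op_basis \<alpha> i w u = 0"
proof -
  let ?D = "cdes \<alpha>" and ?a = "inv w i" and ?b = "inv w (Suc i)"
  have Dsub: "?D \<subseteq> {1..<n}" using cdes_sub[OF comp] .
  have wS: "w \<in> Sn n" and des: "pdes n w \<subseteq> ?D" using w by (auto simp: OP_def)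
  show ?thesis
  proof (cases "bi ?D ?a < bi ?D ?b")
    case True
    then have up: "?a < ?b" and ns: "\<not> sb ?D ?a ?b" using bi_less_iff[OF Dsub] by blast+
    have w2: "sref i \<circ> w \<in> OP n \<alpha>" using OP_up[OF Dsub wS des i up ns] sref_Sn[OF wS i] by (simp add: OP_def)
    have "u \<noteq> w" "u \<noteq> sref i \<circ> w" using u w w2 by auto
    then show ?thesis using True by (auto simp: op_basis_def blk_bi hb_def)
  next
    case False
    then show ?thesis using u w by (auto simp: op_basis_def blk_bi hb_def)
  qed
qed

lemma opgen_FOP:
  assumes comp: "is_composition n \<alpha>" and i: "1 \<le> i" "i < n"
  shows "opgen n \<alpha> i v \<in> FOP n \<alpha>"
  unfolding FOP_def opgen_def by (auto intro!: sum.neutral simp: op_basis_OP[OF comp _ i])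

lemma wact_opgen_FOP:
  assumes comp: "is_composition n \<alpha>" and v: "v \<in> FOP n \<alpha>"
  shows "set ws \<subseteq> {1..<n} \<Longrightarrow> wact (opgen n \<alpha>) ws v \<in> FOP n \<alpha>"
  by (induction ws) (auto simp: v opgen_FOP[OF comp])

lemma hact_FOP:
  assumes comp: "is_composition n \<alpha>" and v: "v \<in> FOP n \<alpha>"
  shows "hact n (opgen n \<alpha>) h v \<in> FOP n \<alpha>"
proof -
  have "\<And>w. w \<in> Sn n \<Longrightarrow> wact (opgen n \<alpha>) (rw n w) v \<in> FOP n \<alpha>"
    using wact_opgen_FOP[OF comp v] reduced_set rw_reduced by blast
  then show ?thesis unfolding hact_def FOP_def by simp
qed

lemma hbid_FOP: "hb id \<in> FOP n \<alpha>"
  unfolding FOP_def hb_def using id_OP by auto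

lemma FOP_diff: "x \<in> FOP n \<alpha> \<Longrightarrow> y \<in> FOP n \<alpha> \<Longrightarrow> (\<lambda>u. x u - y u) \<in> FOP n \<alpha>"
  by (simp add: FOP_def)

lemma hgen_Hn: assumes "1 \<le> i" "i < n" shows "hgen n i x \<in> Hn n"
  unfolding Hn_def
proof (intro CollectI allI impI)
  fix w assume w: "w \<notin> Sn n"
  have "\<forall>wa\<in>Sn n. gstep i wa \<noteq> w" using gstep_Sn[OF _ assms] w by blast
  then show "hgen n i x w = 0" unfolding hgen_gstep[OF assms] hb_def
    by (intro sum.neutral) auto
qed

lemma bar_Hn: "x \<in> Hn n \<Longrightarrow> 1 \<le> i \<Longrightarrow> i < n \<Longrightarrow> bar (hgen n) i x \<in> Hn n"
  using hgen_Hn[of i n x] by (simp add: bar_apply Hn_def)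

lemma wact_bar_Hn: "x \<in> Hn n \<Longrightarrow> set ws \<subseteq> {1..<n} \<Longrightarrow> wact (bar (hgen n)) ws x \<in> Hn n"
  by (induction ws) (auto intro: bar_Hn)

lemma hbid_Hn: "hb id \<in> Hn n" by (simp add: Hn_def hb_def)

lemma pibar_Hn: "w \<in> Sn n \<Longrightarrow> pibar_w n w \<in> Hn n"
  unfolding pibar_w_def using wact_bar_Hn[OF hbid_Hn] reduced_set rw_reduced by blast

lemma sum_Hn: "(\<And>k. k \<in> K \<Longrightarrow> f k \<in> Hn n) \<Longrightarrow> (\<lambda>u. \<Sum>k\<in>K. c k * f k u) \<in> Hn n"
  by (simp add: Hn_def)


definition Low :: "nat \<Rightarrow> nat \<Rightarrow> (perm \<Rightarrow> 'a::field) \<Rightarrow> bool" where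
  "Low n m f \<longleftrightarrow> (\<forall>y. f y \<noteq> 0 \<longrightarrow> perm_len n y < m)"

lemma gstep_len: "t \<in> Sn n \<Longrightarrow> 1 \<le> i \<Longrightarrow> i < n \<Longrightarrow> perm_len n (gstep i t) \<le> Suc (perm_len n t)"
  using len_sref_cases[of t n i] by (auto simp: gstep_def)

lemma wact_hgen_hb:
  assumes u: "u \<in> Sn n"
  shows "set ws \<subseteq> {1..<n} \<Longrightarrow> \<exists>t. t \<in> Sn n \<and> wact (hgen n) ws (hb u) = (hb t :: perm \<Rightarrow> 'a::field) \<and> perm_len n t \<le> length ws + perm_len n u"
proof (induction ws)
  case Nil then show ?case using u by auto
next
  case (Cons i ws)
  then obtain t where t: "t \<in> Sn n" "wact (hgen n) ws (hb u) = (hb t :: perm \<Rightarrow> 'a)" "perm_len n t \<le> length ws + perm_len n u"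
    by auto
  have i: "1 \<le> i" "i < n" using Cons.prems by auto
  have "wact (hgen n) (i # ws) (hb u) = (hb (gstep i t) :: perm \<Rightarrow> 'a)"
    using t(2) hgen_hb_step[OF t(1) i] by simp
  moreover have "perm_len n (gstep i t) \<le> length (i # ws) + perm_len n u"
    using gstep_len[OF t(1) i] t(3) by simp
  ultimately show ?case using gstep_Sn[OF t(1) i] by blast
qed

lemma hgen_Low:
  assumes i: "1 \<le> i" "i < n" and L: "Low n m r"
  shows "Low n (Suc m) (hgen n i r)"
  unfolding Low_def
proof (intro allI impI)
  fix y assume "hgen n i r y \<noteq> 0"
  then have "(\<Sum>w\<in>Sn n. r w * hb (gstep i w) y) \<noteq> 0" by (simp add: hgen_gstep[OF i])
  then obtain w where w: "w \<in> Sn n" "r w * hb (gstep i w) y \<noteq> 0"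
    by (meson sum.not_neutral_contains_not_neutral)
  then have "r w \<noteq> 0" "gstep i w = y" by (auto simp: hb_def split: if_splits)
  moreover have "perm_len n w < m" using L \<open>r w \<noteq> 0\<close> by (simp add: Low_def)
  ultimately show "perm_len n y < Suc m" using gstep_len[OF w(1) i] by simp
qed

lemma bar_expand:
  assumes u: "u \<in> Sn n"
  shows "set ws \<subseteq> {1..<n} \<Longrightarrow> Low n (length ws + perm_len n u)
           (\<lambda>x. wact (bar (hgen n)) ws (hb u) x - wact (hgen n) ws (hb u :: perm \<Rightarrow> 'a::field) x)"
proof (induction ws)
  case Nil then show ?case by (simp add: Low_def)
next
  case (Cons i ws)
  have i: "1 \<le> i" "i < n" using Cons.prems by auto
  let ?A = "wact (bar (hgen n)) ws (hb u) :: perm \<Rightarrow> 'a"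
  let ?H = "wact (hgen n) ws (hb u) :: perm \<Rightarrow> 'a"
  let ?m = "length ws + perm_len n u"
  let ?r = "\<lambda>x. ?A x - ?H x"
  have IH: "Low n ?m ?r" using Cons by auto
  obtain t where t: "t \<in> Sn n" "?H = hb t" "perm_len n t \<le> ?m"
    using wact_hgen_hb[OF u, of ws] Cons.prems by auto
  have hr: "Low n (Suc ?m) (hgen n i ?r)" using hgen_Low[OF i IH] .
  show ?case unfolding Low_def
  proof (intro allI impI)
    fix y
    assume ne: "wact (bar (hgen n)) (i # ws) (hb u) y - wact (hgen n) (i # ws) (hb u :: perm \<Rightarrow> 'a) y \<noteq> 0"
    have "wact (bar (hgen n)) (i # ws) (hb u) y - wact (hgen n) (i # ws) (hb u :: perm \<Rightarrow> 'a) y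
        = hgen n i ?r y - ?r y - ?H y"
      by (simp add: bar_apply hgen_diff)
    with ne have "hgen n i ?r y \<noteq> 0 \<or> ?r y \<noteq> 0 \<or> ?H y \<noteq> 0" by auto
    then show "perm_len n y < length (i # ws) + perm_len n u"
    proof (elim disjE)
      assume "hgen n i ?r y \<noteq> 0" then show ?thesis using hr by (simp add: Low_def)
    next
      assume "?r y \<noteq> 0"
      then have "perm_len n y < ?m" using IH unfolding Low_def by blast
      then show ?thesis by simp
    next
      assume "?H y \<noteq> 0" then have "y = t" using t(2) by (simp add: hb_def split: if_splits)
      then show ?thesis using t(3) by simp
    qed
  qed
qed

lemma Fw_tri:
  assumes comp: "is_composition n \<alpha>" and w: "w \<in> OP n \<alpha>"
  shows "Low n (perm_len n w + perm_len n (zz (cdes \<alpha>) n)) (\<lambda>x. Fw n \<alpha> w x - (hb (w \<circ> zz (cdes \<alpha>) n) :: perm \<Rightarrow> 'a::field) x)"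
proof -
  let ?D = "cdes \<alpha>" and ?z = "zz (cdes \<alpha>) n"
  have Dsub: "?D \<subseteq> {1..<n}" using cdes_sub[OF comp] .
  have wS: "w \<in> Sn n" and des: "pdes n w \<subseteq> ?D" using w by (auto simp: OP_def)
  have z: "?z \<in> Sn n" using zz_Sn[OF Dsub] .
  have rz: "reduced_word n ?z (rw n ?z)" using rw_reduced[OF z] .
  have rwz: "reduced_word n (w \<circ> ?z) (rw n w @ rw n ?z)"
    using rw_reduced[OF wS] rz len_add_zz[OF Dsub wS des]
    by (auto simp: reduced_word_def word_perm_append)
  have H: "wact (hgen n) (rw n w) (hb ?z) = (hb (w \<circ> ?z) :: perm \<Rightarrow> 'a)"
    using wact_hgen_up[OF rz, where 'a='a] wact_hgen_up[OF rwz, where 'a='a] by (simp add: wact_append)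
  have lw: "length (rw n w) = perm_len n w" using rw_reduced[OF wS] by (simp add: reduced_word_def)
  show ?thesis using bar_expand[OF z rw_set[OF wS], where 'a='a] H lw by (simp add: Fw_def)
qed

lemma Phi_zero:
  assumes comp: "is_composition n \<alpha>" and v: "v \<in> FOP n \<alpha>" and P: "Phi n \<alpha> v = (\<lambda>u. 0)"
  shows "v = (\<lambda>u. 0)"
proof (rule ccontr)
  assume nz: "v \<noteq> (\<lambda>u. 0)"
  let ?D = "cdes \<alpha>" and ?z = "zz (cdes \<alpha>) n"
  have Dsub: "?D \<subseteq> {1..<n}" using cdes_sub[OF comp] .
  let ?S = "{w\<in>OP n \<alpha>. v w \<noteq> 0}"
  have fin: "finite ?S" using OP_finite by simp
  have ne: "?S \<noteq> {}" using nz v by (auto simp: FOP_def fun_eq_iff)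
  have "Max (perm_len n ` ?S) \<in> perm_len n ` ?S" using fin ne by (intro Max_in) auto
  then obtain w0 where w0: "w0 \<in> ?S" and w0M: "perm_len n w0 = Max (perm_len n ` ?S)" by auto
  have mx: "perm_len n w \<le> perm_len n w0" if "w \<in> ?S" for w
    using that fin w0M by (simp add: Max_ge)
  have w0OP: "w0 \<in> OP n \<alpha>" using w0 by simp
  define y where "y = w0 \<circ> ?z"
  have ly: "perm_len n y = perm_len n w0 + perm_len n ?z"
    unfolding y_def using len_add_zz[OF Dsub OP_Sn[OF w0OP] OP_des[OF w0OP]] .
  have zz2: "?z \<circ> ?z = id" using zz_zz[OF Dsub] by (auto simp: fun_eq_iff)
  have term0: "v w * Fw n \<alpha> w y = 0" if w: "w \<in> OP n \<alpha>" "w \<noteq> w0" for w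
  proof (cases "v w = 0")
    case False
    then have "perm_len n w \<le> perm_len n w0" using mx w by simp
    have ne: "w \<circ> ?z \<noteq> y"
    proof
      assume "w \<circ> ?z = y" then have "w \<circ> ?z = w0 \<circ> ?z" by (simp add: y_def)
      then have "w \<circ> ?z \<circ> ?z = w0 \<circ> ?z \<circ> ?z" by simp
      then show False using zz2 w(2) by (simp add: comp_assoc)
    qed
    have L: "Low n (perm_len n w + perm_len n ?z) (\<lambda>x. Fw n \<alpha> w x - (hb (w \<circ> ?z) :: perm \<Rightarrow> 'a) x)"
      using Fw_tri[OF comp w(1)] .
    have "Fw n \<alpha> w y - (hb (w \<circ> ?z) :: perm \<Rightarrow> 'a) y = 0"
    proof (rule ccontr)
      assume "Fw n \<alpha> w y - (hb (w \<circ> ?z) :: perm \<Rightarrow> 'a) y \<noteq> 0"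
      then have "perm_len n y < perm_len n w + perm_len n ?z" using L by (simp add: Low_def)
      then show False using ly \<open>perm_len n w \<le> perm_len n w0\<close> by simp
    qed
    then show ?thesis using ne by (simp add: hb_def)
  qed simp
  have L0: "Low n (perm_len n w0 + perm_len n ?z) (\<lambda>x. Fw n \<alpha> w0 x - (hb y :: perm \<Rightarrow> 'a) x)"
    using Fw_tri[OF comp w0OP] by (simp add: y_def)
  have "Fw n \<alpha> w0 y - (hb y :: perm \<Rightarrow> 'a) y = 0"
  proof (rule ccontr)
    assume "Fw n \<alpha> w0 y - (hb y :: perm \<Rightarrow> 'a) y \<noteq> 0"
    then have "perm_len n y < perm_len n w0 + perm_len n ?z" using L0 by (simp add: Low_def)
    then show False using ly by simp
  qed
  then have F0: "Fw n \<alpha> w0 y = (1 :: 'a)" by (simp add: hb_def)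
  have "Phi n \<alpha> v y = (\<Sum>w\<in>OP n \<alpha>. v w * Fw n \<alpha> w y)" by (simp add: Phi_def)
  also have "\<dots> = v w0 * Fw n \<alpha> w0 y + (\<Sum>w\<in>OP n \<alpha> - {w0}. v w * Fw n \<alpha> w y)"
    using sum.remove[OF OP_finite w0OP] by simp
  also have "(\<Sum>w\<in>OP n \<alpha> - {w0}. v w * Fw n \<alpha> w y) = 0"
    using term0 by (intro sum.neutral) auto
  finally have "Phi n \<alpha> v y = v w0" using F0 by simp
  then show False using P w0 by simp
qed

lemma Phi_inj:
  assumes comp: "is_composition n \<alpha>"
  shows "inj_on (Phi n \<alpha>) (FOP n \<alpha>)"
proof (rule inj_onI)
  fix x y assume x: "x \<in> FOP n \<alpha>" and y: "y \<in> FOP n \<alpha>" and e: "Phi n \<alpha> x = Phi n \<alpha> y"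
  have "Phi n \<alpha> (\<lambda>u. x u - y u) = (\<lambda>u. 0)" using e by (simp add: Phi_diff)
  then have "(\<lambda>u. x u - y u) = (\<lambda>u. 0)" using Phi_zero[OF comp FOP_diff[OF x y]] by blast
  then show "x = y" by (auto simp: fun_eq_iff)
qed


lemma Phi_hbid:
  assumes comp: "is_composition n \<alpha>"
  shows "Phi n \<alpha> (hb id) = pi_w n (w0c n \<alpha>)"
proof -
  have "Phi n \<alpha> (hb id) = Fw n \<alpha> id"
    by (simp add: Phi_def hb_sum_left OP_finite id_OP)
  also have "\<dots> = hb (zz (cdes \<alpha>) n)" by (simp add: Fw_def)
  also have "\<dots> = pi_w n (w0c n \<alpha>)"
    by (simp add: w0c_eq[OF comp] pi_w_hb zz_Sn[OF cdes_sub[OF comp]])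
  finally show ?thesis .
qed

lemma Phi_as_hmul:
  assumes comp: "is_composition n \<alpha>"
  shows "Phi n \<alpha> v = hmul n (\<lambda>u. \<Sum>w\<in>OP n \<alpha>. v w * pibar_w n w u) (pi_w n (w0c n \<alpha>))"
  by (simp add: hmul_sum1[OF OP_finite] Phi_def F_eq[OF comp OP_Sn])

lemma h_Hn: "(\<lambda>u. \<Sum>w\<in>OP n \<alpha>. v w * pibar_w n w u) \<in> Hn n"
  by (rule sum_Hn) (simp add: pibar_Hn OP_Sn)

theorem mainTheorem10:
  fixes n :: nat and \<alpha> :: "nat list"
  assumes "is_composition n \<alpha>"
  defines "\<phi> \<equiv> (\<lambda>v :: perm \<Rightarrow> 'a::field. (\<lambda>u. \<Sum>w\<in>OP n \<alpha>.
              v w * hmul n (pibar_w n w) (pi_w n (w0c n \<alpha>)) u))"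
  shows "(\<forall>v\<in>FOP n \<alpha>. \<exists>h\<in>Hn n. v = hact n (opgen n \<alpha>) h (hb id :: perm \<Rightarrow> 'a))
       \<and> inj_on \<phi> (FOP n \<alpha>)
       \<and> \<phi> ` (FOP n \<alpha>) = Pmod n [n] \<alpha>
       \<and> (Pmod n [n] \<alpha> :: (perm \<Rightarrow> 'a) set) = {hmul n h (pi_w n (w0c n \<alpha>)) | h. h \<in> (Hn n :: (perm \<Rightarrow> 'a) set)}
       \<and> (\<forall>h\<in>Hn n. \<forall>v\<in>FOP n \<alpha>. \<phi> (hact n (opgen n \<alpha>) h v) = hmul n h (\<phi> v))"
proof -
  note comp = assms(1)
  have phi: "\<phi> = Phi n \<alpha>"
  proof
    fix v :: "perm \<Rightarrow> 'a"
    show "\<phi> v = Phi n \<alpha> v" unfolding \<phi>_def Phi_def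
      by (intro ext sum.cong refl) (simp add: F_eq[OF comp OP_Sn])
  qed
  let ?e = "pi_w n (w0c n \<alpha>) :: perm \<Rightarrow> 'a"
  have P4: "(Pmod n [n] \<alpha> :: (perm \<Rightarrow> 'a) set) = {hmul n h ?e | h. h \<in> (Hn n :: (perm \<Rightarrow> 'a) set)}"
    by (simp add: Pmod_def w0_single pibar_id hmul_id)
  have P5: "\<forall>h\<in>Hn n. \<forall>v\<in>FOP n \<alpha>. \<phi> (hact n (opgen n \<alpha>) h v) = hmul n h (\<phi> v)"
    by (simp add: phi Phi_hact[OF comp])
  have P2: "inj_on \<phi> (FOP n \<alpha>)" using Phi_inj[OF comp] by (simp add: phi)
  have P1: "\<forall>v\<in>FOP n \<alpha>. \<exists>h\<in>Hn n. v = hact n (opgen n \<alpha>) h (hb id :: perm \<Rightarrow> 'a)"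
  proof
    fix v :: "perm \<Rightarrow> 'a" assume v: "v \<in> FOP n \<alpha>"
    let ?h = "\<lambda>u. \<Sum>w\<in>OP n \<alpha>. v w * pibar_w n w u"
    let ?y = "hact n (opgen n \<alpha>) ?h (hb id)"
    have y: "?y \<in> FOP n \<alpha>" using hact_FOP[OF comp hbid_FOP] .
    have "Phi n \<alpha> ?y = hmul n ?h (Phi n \<alpha> (hb id))" using Phi_hact[OF comp] .
    also have "\<dots> = Phi n \<alpha> v" by (simp add: Phi_hbid[OF comp] Phi_as_hmul[OF comp, of v, symmetric])
    finally have "?y = v" using Phi_inj[OF comp] y v by (meson inj_onD)
    then show "\<exists>h\<in>Hn n. v = hact n (opgen n \<alpha>) h (hb id)" using h_Hn by metis
  qed
  have P3: "\<phi> ` (FOP n \<alpha>) = Pmod n [n] \<alpha>"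
  proof
    show "\<phi> ` FOP n \<alpha> \<subseteq> Pmod n [n] \<alpha>"
    proof
      fix x assume "x \<in> \<phi> ` FOP n \<alpha>"
      then obtain v where v: "v \<in> FOP n \<alpha>" "x = Phi n \<alpha> v" using phi by auto
      have hH: "(\<lambda>u. \<Sum>w\<in>OP n \<alpha>. v w * pibar_w n w u) \<in> Hn n" by (rule h_Hn)
      show "x \<in> Pmod n [n] \<alpha>" unfolding P4 using v(2) Phi_as_hmul[OF comp, of v] hH by blast
    qed
    show "Pmod n [n] \<alpha> \<subseteq> \<phi> ` FOP n \<alpha>"
    proof
      fix x assume "x \<in> (Pmod n [n] \<alpha> :: (perm \<Rightarrow> 'a) set)"
      then obtain h where h: "h \<in> Hn n" "x = hmul n h ?e" using P4 by auto
      have "x = Phi n \<alpha> (hact n (opgen n \<alpha>) h (hb id))"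
        using h(2) by (simp add: Phi_hact[OF comp] Phi_hbid[OF comp])
      then show "x \<in> \<phi> ` FOP n \<alpha>" using hact_FOP[OF comp hbid_FOP] phi by auto
    qed
  qed
  show ?thesis using P1 P2 P3 P4 P5 by blast
qed


end
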